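(* Let $(\varphi_\alpha)_{\alpha>0}$ be a non-linear regularizing filter satisfying Assumption A. Then for every $\alpha>0$, $\operatorname{dom}(\mathbf{M}_\kappa^+\circ\Phi_{\alpha,\kappa})=\ell^2(\Lambda)$. Moreover, there exist proper, convex, lower semi-continuous $s_\lambda\colon\mathbb{R}\to\mathbb{R}\cup\{\infty\}$, $\lambda\in\Lambda$, with $s_\lambda\ge s_\lambda(0)=0$ and $\varphi_\alpha(\kappa_\lambda,\cdot)=\operatorname{prox}_{\alpha s_\lambda}$ for all $\alpha>0$, and the functional $\mathcal{R}((x_\lambda)_\lambda):=\sum_\lambda s_\lambda(\kappa_\lambda x_\lambda)$ on $\ell^2(\Lambda)$ is proper, convex, lower semi-continuous and norm-coercive, and satisfies for all $\alpha>0$ and all $z\in\ell^2(\Lambda)$: $$\mathbf{M}_\kappa^+\circ\Phi_{\alpha,\kappa}(z)=\operatorname{argmin}_{x\in\ell^2(\Lambda)}\tfrac12\|\mathbf{M}_\kappa x-z\|^2+\alpha\mathcal{R}(x).$$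
   Context: $\Lambda$ is an at most countable index set and $\kappa=(\kappa_\lambda)_{\lambda\in\Lambda}\in(0,\infty)^\Lambda$ with $\sup_\lambda\kappa_\lambda<\infty$. $\mathbf{M}_\kappa\colon\ell^2(\Lambda)\to\ell^2(\Lambda)$, $(x_\lambda)\mapsto(\kappa_\lambda x_\lambda)$; $\mathbf{M}_\kappa^+$ is its Moore–Penrose inverse, with domain $\{(c_\lambda)\in\ell^2:(c_\lambda/\kappa_\lambda)\in\ell^2\}$ and $\mathbf{M}_\kappa^+((c_\lambda))=(c_\lambda/\kappa_\lambda)$. A non-linear regularizing filter is a family $(\varphi_\alpha)_{\alpha>0}$ of functions $\varphi_\alpha\colon(0,\infty)\times\mathbb{R}\to\mathbb{R}$ such that for all $\alpha,\kappa>0$: (F1) $\varphi_\alpha(\kappa,\cdot)$ is non-decreasing; (F2) $\varphi_\alpha(\kappa,\cdot)$ is 1-Lipschitz; (F3) $\varphi_\alpha(\kappa,0)=0$; (F4) $\lim_{\alpha\to0}\varphi_\alpha(\kappa,c)=c$ for all $c\in\mathbb{R}$. $\Phi_{\alpha,\kappa}((c_\lambda))=(\varphi_\alpha(\kappa_\lambda,c_\lambda))_\lambda$; $\operatorname{dom}(\mathbf{M}_\kappa^+\circ\Phi_{\alpha,\kappa})=\{z\in\ell^2(\Lambda):\Phi_{\alpha,\kappa}(z)\in\operatorname{dom}(\mathbf{M}_\kappa^+)\}$. Assumption A: (A1) for all $\kappa>0$ and $y\in\mathbb{R}$, the set $\big(\varphi_\alpha(\kappa,\cdot)^{-1}(y)-y\big)/\alpha=\{(w-y)/\alpha:\varphi_\alpha(\kappa,w)=y\}$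 does not depend on $\alpha>0$; (A2) for some $\tilde\alpha>0$ there exist $b,c>0$ such that for all $\kappa>0$ and all $x\in\mathbb{R}$: $|x|\le\min\big(\varphi_{\tilde\alpha}(\kappa,\cdot)^{-1}(c\kappa)\big)\Rightarrow|\varphi_{\tilde\alpha}(\kappa,x)|\le\frac{\kappa^2}{\kappa^2+\tilde\alpha b}|x|$ (here $\min$ of the closed interval $\varphi_{\tilde\alpha}(\kappa,\cdot)^{-1}(c\kappa)$ is its smallest element). $\operatorname{prox}_f(x)=\operatorname{argmin}_y\tfrac12|x-y|^2+f(y)$. A functional $\mathcal{R}$ is norm-coercive if $\mathcal{R}(x^k)\to\infty$ for every sequence $(x^k)$ in $\operatorname{dom}(\mathcal{R})$ with $\|x^k\|\to\infty$. *)

theory Defs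
  imports "HOL-Analysis.Analysis"
begin

text \<open>The index set Lambda is the (at most countable) universe of a countable type 'i.
  Sequence spaces are represented by functions 'i => real.\<close>

definition l2 :: "('i \<Rightarrow> real) set" where
  "l2 = {x. (\<lambda>i. (x i)\<^sup>2) summable_on UNIV}"

definition l2norm :: "('i \<Rightarrow> real) \<Rightarrow> real" where
  "l2norm x = sqrt (\<Sum>\<^sub>\<infinity>i. (x i)\<^sup>2)"

definition Mk :: "('i \<Rightarrow> real) \<Rightarrow> ('i \<Rightarrow> real) \<Rightarrow> ('i \<Rightarrow> real)" where
  "Mk \<kappa> x = (\<lambda>i. \<kappa> i * x i)"

definition dom_Mk_pinv :: "('i \<Rightarrow> real) \<Rightarrow> ('i \<Rightarrow> real) set" where
  "dom_Mk_pinv \<kappa> = {c \<in> l2. (\<lambda>i. c i / \<kappa> i) \<in> l2}"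

definition Mk_pinv :: "('i \<Rightarrow> real) \<Rightarrow> ('i \<Rightarrow> real) \<Rightarrow> ('i \<Rightarrow> real)" where
  "Mk_pinv \<kappa> c = (\<lambda>i. c i / \<kappa> i)"

definition Phi :: "(real \<Rightarrow> real \<Rightarrow> real \<Rightarrow> real) \<Rightarrow> real \<Rightarrow> ('i \<Rightarrow> real) \<Rightarrow> ('i \<Rightarrow> real) \<Rightarrow> ('i \<Rightarrow> real)" where
  "Phi \<phi> \<alpha> \<kappa> c = (\<lambda>i. \<phi> \<alpha> (\<kappa> i) (c i))"

definition dom_Mk_pinv_Phi :: "(real \<Rightarrow> real \<Rightarrow> real \<Rightarrow> real) \<Rightarrow> real \<Rightarrow> ('i \<Rightarrow> real) \<Rightarrow> ('i \<Rightarrow> real) set" where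
  "dom_Mk_pinv_Phi \<phi> \<alpha> \<kappa> = {z \<in> l2. Phi \<phi> \<alpha> \<kappa> z \<in> dom_Mk_pinv \<kappa>}"

text \<open>Non-linear regularizing filter: \<phi> \<alpha> \<kappa> c = phi_alpha(kappa, c).\<close>
definition nonlinear_reg_filter :: "(real \<Rightarrow> real \<Rightarrow> real \<Rightarrow> real) \<Rightarrow> bool" where
  "nonlinear_reg_filter \<phi> \<longleftrightarrow>
    (\<forall>\<alpha>>0. \<forall>k>0.
      mono (\<phi> \<alpha> k) \<and>
      (\<forall>x y. \<bar>\<phi> \<alpha> k x - \<phi> \<alpha> k y\<bar> \<le> \<bar>x - y\<bar>) \<and>
      \<phi> \<alpha> k 0 = 0) \<and>
    (\<forall>k>0. \<forall>c. ((\<lambda>\<alpha>. \<phi> \<alpha> k c) \<longlongrightarrow> c) (at_right 0))"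

text \<open>Assumption A.  In (A2), "|x| <= min of the preimage of c*kappa" is written as
  "|x| is a lower bound of the preimage" (equal to the minimum for a nonempty closed
  interval bounded below).\<close>
definition assumption_A :: "(real \<Rightarrow> real \<Rightarrow> real \<Rightarrow> real) \<Rightarrow> bool" where
  "assumption_A \<phi> \<longleftrightarrow>
    (\<forall>k>0. \<forall>y. \<forall>\<alpha>>0. \<forall>\<beta>>0.
        {(w - y) / \<alpha> | w. \<phi> \<alpha> k w = y} = {(w - y) / \<beta> | w. \<phi> \<beta> k w = y}) \<and>
    (\<exists>\<alpha>t>0. \<exists>b>0. \<exists>c>0. \<forall>k>0. \<forall>x.
        (\<forall>w. \<phi> \<alpha>t k w = c * k \<longrightarrow> \<bar>x\<bar> \<le> w) \<longrightarrow>
        \<bar>\<phi> \<alpha>t k x\<bar> \<le> k\<^sup>2 / (k\<^sup>2 + \<alpha>t * b) * \<bar>x\<bar>)"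

definition argmin_on :: "'a set \<Rightarrow> ('a \<Rightarrow> 'b::order) \<Rightarrow> 'a set" where
  "argmin_on D F = {y \<in> D. \<forall>z\<in>D. F y \<le> F z}"

text \<open>Functions R -> R \<union> {\<infinity>} that are nonnegative are represented as ennreal-valued.\<close>
definition proper_fun :: "'a set \<Rightarrow> ('a \<Rightarrow> ennreal) \<Rightarrow> bool" where
  "proper_fun D F \<longleftrightarrow> (\<exists>x\<in>D. F x \<noteq> \<infinity>)"

definition convex_fun_on :: "'a::real_vector set \<Rightarrow> ('a \<Rightarrow> ennreal) \<Rightarrow> bool" where
  "convex_fun_on D F \<longleftrightarrow> (\<forall>x\<in>D. \<forall>y\<in>D. \<forall>t::real. 0 < t \<and> t < 1 \<longrightarrow>
      F ((1 - t) *\<^sub>R x + t *\<^sub>R y) \<le> ennreal (1 - t) * F x + ennreal t * F y)"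

definition convex_l2 :: "(('i \<Rightarrow> real) \<Rightarrow> ennreal) \<Rightarrow> bool" where
  "convex_l2 F \<longleftrightarrow> (\<forall>x\<in>l2. \<forall>y\<in>l2. \<forall>t::real. 0 < t \<and> t < 1 \<longrightarrow>
      F (\<lambda>i. (1 - t) * x i + t * y i) \<le> ennreal (1 - t) * F x + ennreal t * F y)"

definition lsc_real :: "(real \<Rightarrow> ennreal) \<Rightarrow> bool" where
  "lsc_real F \<longleftrightarrow> (\<forall>x X. X \<longlonglongrightarrow> x \<longrightarrow> F x \<le> liminf (\<lambda>n. F (X n)))"

definition lsc_l2 :: "(('i \<Rightarrow> real) \<Rightarrow> ennreal) \<Rightarrow> bool" where
  "lsc_l2 F \<longleftrightarrow> (\<forall>x\<in>l2. \<forall>X. (\<forall>n. X n \<in> l2) \<longrightarrow> (\<lambda>n. l2norm (\<lambda>i. X n i - x i)) \<longlonglongrightarrow> 0 \<longrightarrow>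
      F x \<le> liminf (\<lambda>n. F (X n)))"

definition norm_coercive_l2 :: "(('i \<Rightarrow> real) \<Rightarrow> ennreal) \<Rightarrow> bool" where
  "norm_coercive_l2 F \<longleftrightarrow> (\<forall>X. (\<forall>n. X n \<in> l2 \<and> F (X n) \<noteq> \<infinity>) \<longrightarrow>
      filterlim (\<lambda>n. l2norm (X n)) at_top sequentially \<longrightarrow> (\<lambda>n. F (X n)) \<longlonglongrightarrow> \<infinity>)"

end

theory Submission
  imports Defs
begin


definition Hf :: "(real \<Rightarrow> real) \<Rightarrow> real \<Rightarrow> real" where
  "Hf g x = (if 0 \<le> x then integral {0..x} g else - integral {x..0} g)"

lemma lip_cont:
  assumes lip: "\<forall>x y. \<bar>g x - g y\<bar> \<le> \<bar>x - y\<bar>"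
  shows "continuous_on S (g::real\<Rightarrow>real)"
proof (rule lipschitz_on_continuous_on)
  show "1-lipschitz_on S g" using lip by (auto simp: lipschitz_on_def dist_real_def)
qed

lemma integral_deriv_at:
  assumes "continuous_on UNIV (g::real\<Rightarrow>real)" "a < x" "x < b"
  shows "((\<lambda>x. integral {a..x} g) has_real_derivative g x) (at x)"
proof -
  have c: "continuous_on {a..b} g" by (rule continuous_on_subset[OF assms(1)]) simp
  have t: "x \<in> {a..b}" using assms by simp
  have d: "((\<lambda>x. integral {a..x} g) has_real_derivative g x) (at x within {a..b})"
    by (rule integral_has_real_derivative[OF c t])
  have "x \<in> interior {a..b}" using assms by simp
  then have "at x within {a..b} = at x" by (rule at_within_interior)
  with d show ?thesis by simp
qed

lemma integral_cont_on:
  assumes "continuous_on UNIV (g::real\<Rightarrow>real)"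
  shows "continuous_on {a..b} (\<lambda>x. integral {a..x} g)"
  using assms by (intro indefinite_integral_continuous_1 integrable_continuous_real)
    (auto intro: continuous_on_subset[OF assms(1)])

lemma Hf_diff:
  assumes "continuous_on UNIV (g::real\<Rightarrow>real)" "w \<le> w'"
  shows "Hf g w' - Hf g w = integral {w..w'} g"
proof -
  have int: "g integrable_on {p..q}" for p q
    using assms(1) by (intro integrable_continuous_real) (auto intro: continuous_on_subset[OF assms(1)])
  show ?thesis
  proof (cases "0 \<le> w")
    case True
    have "integral {0..w} g + integral {w..w'} g = integral {0..w'} g"
      using True assms(2) by (intro Henstock_Kurzweil_Integration.integral_combine int)
    moreover have "Hf g w = integral {0..w} g" "Hf g w' = integral {0..w'} g"
      using True assms(2) by (auto simp: Hf_def)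
    ultimately show ?thesis by linarith
  next
    case False
    show ?thesis
    proof (cases "0 \<le> w'")
      case True
      have "integral {w..0} g + integral {0..w'} g = integral {w..w'} g"
        using True False by (intro Henstock_Kurzweil_Integration.integral_combine int) auto
      moreover have "Hf g w = - integral {w..0} g" "Hf g w' = integral {0..w'} g"
        using True False by (auto simp: Hf_def)
      ultimately show ?thesis by linarith
    next
      case F2: False
      have "integral {w..w'} g + integral {w'..0} g = integral {w..0} g"
        using F2 assms(2) by (intro Henstock_Kurzweil_Integration.integral_combine int) auto
      moreover have "Hf g w = - integral {w..0} g" "Hf g w' = - integral {w'..0} g"
        using F2 False by (auto simp: Hf_def)
      ultimately show ?thesis by linarith
    qed
  qed
qed

lemma coco_up:
  fixes g :: "real \<Rightarrow> real"
  assumes mono: "mono g" and lip: "\<forall>x y. \<bar>g x - g y\<bar> \<le> \<bar>x - y\<bar>" and "a \<le> b"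
  shows "integral {a..b} g \<ge> g a * (b - a) + (g b - g a)^2 / 2"
proof -
  have cont: "continuous_on UNIV g" using lip_cont[OF lip] .
  define F where "F x = integral {a..x} g" for x
  define D where "D = g b - g a"
  have D0: "0 \<le> D" using mono assms(3) by (simp add: D_def mono_def)
  have Dle: "D \<le> b - a" using lip[rule_format, of b a] assms(3) by (simp add: D_def)
  define u where "u = b - D"
  have au: "a \<le> u" "u \<le> b" using D0 Dle by (auto simp: u_def)
  have dF: "\<And>x. a < x \<Longrightarrow> x < b \<Longrightarrow> (F has_real_derivative g x) (at x)"
    unfolding F_def using integral_deriv_at[OF cont] by blast
  have cF: "continuous_on {a..b} F" unfolding F_def using integral_cont_on[OF cont] .
  define G1 where "G1 x = F x - g a * (x - a)" for x
  define G2 where "G2 x = G1 x - (x - u)^2/2" for x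
  have g1: "G1 a \<le> G1 u"
  proof (rule DERIV_nonneg_imp_increasing_open[OF au(1)])
    fix x assume x: "a < x" "x < u"
    have d: "(G1 has_real_derivative g x - g a * 1) (at x)"
      unfolding G1_def using x au by (auto intro!: derivative_eq_intros dF)
    moreover have "g x - g a * 1 \<ge> 0" using mono x by (simp add: mono_def)
    ultimately show "\<exists>y. (G1 has_real_derivative y) (at x) \<and> 0 \<le> y" by blast
  next
    show "continuous_on {a..u} G1" unfolding G1_def using au
      by (intro continuous_intros continuous_on_subset[OF cF]) auto
  qed
  have g0: "G1 a = 0" by (simp add: G1_def F_def)
  have g2: "G2 u \<le> G2 b"
  proof (rule DERIV_nonneg_imp_increasing_open[OF au(2)])
    fix x assume x: "u < x" "x < b"
    have d: "(G2 has_real_derivative (g x - g a * 1) - (2 * (x - u) ^ 1 * 1)/2) (at x)"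
      unfolding G2_def G1_def using x au by (auto intro!: derivative_eq_intros dF)
    have e: "(g x - g a * 1) - (2 * (x - u) ^ 1 * 1)/2 = g x - g a - (x - u)" by (simp add: field_simps)
    have "\<bar>g b - g x\<bar> \<le> \<bar>b - x\<bar>" using lip by blast
    hence "g b - g x \<le> b - x" using x by linarith
    hence "g x - g a - (x - u) \<ge> 0" unfolding u_def D_def by linarith
    thus "\<exists>y. (G2 has_real_derivative y) (at x) \<and> 0 \<le> y" using DERIV_cong[OF d e] by blast
  next
    show "continuous_on {u..b} G2" unfolding G2_def G1_def using au
      by (intro continuous_intros continuous_on_subset[OF cF]) auto
  qed
  have "G2 u = G1 u" by (simp add: G2_def)
  hence G2b: "G2 b \<ge> 0" using g0 g1 g2 by linarith
  have "G2 b = F b - g a * (b - a) - D^2/2"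
  proof -
    have "b - u = D" by (simp add: u_def)
    then show ?thesis unfolding G2_def G1_def by simp
  qed
  hence "g a * (b - a) + D^2 / 2 \<le> F b" using G2b by linarith
  thus ?thesis unfolding F_def D_def .
qed

lemma coco_down:
  fixes g :: "real \<Rightarrow> real"
  assumes mono: "mono g" and lip: "\<forall>x y. \<bar>g x - g y\<bar> \<le> \<bar>x - y\<bar>" and "a \<le> b"
  shows "integral {a..b} g \<le> g b * (b - a) - (g b - g a)^2 / 2"
proof -
  have cont: "continuous_on UNIV g" using lip_cont[OF lip] .
  define F where "F x = integral {a..x} g" for x
  define D where "D = g b - g a"
  have D0: "0 \<le> D" using mono assms(3) by (simp add: D_def mono_def)
  have Dle: "D \<le> b - a" using lip[rule_format, of b a] assms(3) by (simp add: D_def)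
  define u where "u = a + D"
  have au: "a \<le> u" "u \<le> b" using D0 Dle by (auto simp: u_def)
  have dF: "\<And>x. a < x \<Longrightarrow> x < b \<Longrightarrow> (F has_real_derivative g x) (at x)"
    unfolding F_def using integral_deriv_at[OF cont] by blast
  have cF: "continuous_on {a..b} F" unfolding F_def using integral_cont_on[OF cont] .
  define K where "K x = g b * (x - a) - F x" for x
  define K2 where "K2 x = K x - (D^2/2 - (u - x)^2/2)" for x
  have k1: "K2 a \<le> K2 u"
  proof (rule DERIV_nonneg_imp_increasing_open[OF au(1)])
    fix x assume x: "a < x" "x < u"
    have d: "(K2 has_real_derivative (g b * 1 - g x - (0 - 2 * (u - x) ^ 1 * (0 - 1) / 2))) (at x)"
      unfolding K2_def K_def using x au by (auto intro!: derivative_eq_intros dF)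
    have e: "g b * 1 - g x - (0 - 2 * (u - x) ^ 1 * (0 - 1) / 2) = g b - g x - (u - x)" by simp
    have "\<bar>g x - g a\<bar> \<le> \<bar>x - a\<bar>" using lip by blast
    hence "g x - g a \<le> x - a" using x by linarith
    hence "g b - g x - (u - x) \<ge> 0" unfolding u_def D_def by linarith
    thus "\<exists>y. (K2 has_real_derivative y) (at x) \<and> 0 \<le> y" using DERIV_cong[OF d e] by blast
  next
    show "continuous_on {a..u} K2" unfolding K2_def K_def using au
      by (intro continuous_intros continuous_on_subset[OF cF]) auto
  qed
  have k0: "K2 a = 0"
  proof -
    have "u - a = D" by (simp add: u_def)
    then show ?thesis by (simp add: K2_def K_def F_def)
  qed
  have k2: "K u \<le> K b"
  proof (rule DERIV_nonneg_imp_increasing_open[OF au(2)])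
    fix x assume x: "u < x" "x < b"
    have "(K has_real_derivative (g b * 1 - g x)) (at x)"
      unfolding K_def using x au by (auto intro!: derivative_eq_intros dF)
    moreover have "g b * 1 - g x \<ge> 0" using mono x by (simp add: mono_def)
    ultimately show "\<exists>y. (K has_real_derivative y) (at x) \<and> 0 \<le> y" by blast
  next
    show "continuous_on {u..b} K" unfolding K_def using au
      by (intro continuous_intros continuous_on_subset[OF cF]) auto
  qed
  have "K2 u = K u - D^2/2" by (simp add: K2_def)
  hence "K b \<ge> D^2/2" using k0 k1 k2 by linarith
  then have "F b \<le> g b * (b - a) - D^2 / 2" unfolding K_def by linarith
  then show ?thesis unfolding F_def D_def .
qed



definition s0f :: "(real \<Rightarrow> real) \<Rightarrow> real \<Rightarrow> real \<Rightarrow> real" where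
  "s0f g a w = (w * g w - (g w)^2/2 - Hf g w) / a"

definition afff :: "(real \<Rightarrow> real) \<Rightarrow> real \<Rightarrow> real \<Rightarrow> real \<Rightarrow> real" where
  "afff g a w y = s0f g a w + (w - g w) / a * (y - g w)"

definition sf :: "(real \<Rightarrow> real) \<Rightarrow> real \<Rightarrow> real \<Rightarrow> ennreal" where
  "sf g a y = (SUP w. ennreal (afff g a w y))"

lemma Hf_coco:
  fixes g :: "real \<Rightarrow> real"
  assumes mono: "mono g" and lip: "\<forall>x y. \<bar>g x - g y\<bar> \<le> \<bar>x - y\<bar>"
  shows "Hf g w' \<ge> Hf g w + g w * (w' - w) + (g w' - g w)^2 / 2"
proof -
  have cont: "continuous_on UNIV g" using lip_cont[OF lip] .
  show ?thesis
  proof (cases "w \<le> w'")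
    case True
    have "Hf g w' - Hf g w = integral {w..w'} g" using Hf_diff[OF cont True] .
    moreover have "integral {w..w'} g \<ge> g w * (w' - w) + (g w' - g w)^2 / 2"
      using coco_up[OF mono lip True] .
    ultimately show ?thesis by linarith
  next
    case False
    then have le: "w' \<le> w" by simp
    have "Hf g w - Hf g w' = integral {w'..w} g" using Hf_diff[OF cont le] .
    moreover have "integral {w'..w} g \<le> g w * (w - w') - (g w - g w')^2 / 2"
      using coco_down[OF mono lip le] .
    moreover have "(g w - g w')^2 = (g w' - g w)^2" by (simp add: power2_commute)
    ultimately show ?thesis by (simp add: algebra_simps)
  qed
qed

lemma aff_le_s0:
  fixes g :: "real \<Rightarrow> real"
  assumes mono: "mono g" and lip: "\<forall>x y. \<bar>g x - g y\<bar> \<le> \<bar>x - y\<bar>" and a: "a > 0"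
  shows "afff g a w' (g w) \<le> s0f g a w"
proof -
  have eq: "s0f g a w - afff g a w' (g w)
      = (Hf g w' - Hf g w - g w * (w' - w) - (g w - g w')^2 / 2) / a"
    using a by (simp add: s0f_def afff_def field_simps power2_eq_square)
  have "Hf g w' - Hf g w - g w * (w' - w) - (g w - g w')^2 / 2 \<ge> 0"
    using Hf_coco[OF mono lip, of w w'] by (simp add: power2_commute)
  then have "s0f g a w - afff g a w' (g w) \<ge> 0" unfolding eq using a by simp
  then show ?thesis by simp
qed

lemma aff_self: "afff g a w (g w) = s0f g a w"
  by (simp add: afff_def)

lemma sf_lower: "ennreal (afff g a w y) \<le> sf g a y"
  unfolding sf_def by (rule SUP_upper) simp

lemma sf_at:
  fixes g :: "real \<Rightarrow> real"
  assumes mono: "mono g" and lip: "\<forall>x y. \<bar>g x - g y\<bar> \<le> \<bar>x - y\<bar>" and a: "a > 0"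
  shows "sf g a (g w) = ennreal (s0f g a w)"
proof (rule antisym)
  show "sf g a (g w) \<le> ennreal (s0f g a w)"
    unfolding sf_def by (rule SUP_least) (rule ennreal_leI[OF aff_le_s0[OF mono lip a]])
  show "ennreal (s0f g a w) \<le> sf g a (g w)"
    using sf_lower[of g a w "g w"] by (simp add: aff_self)
qed

lemma s0_zero:
  assumes "g 0 = 0"
  shows "s0f g a 0 = 0"
  using assms by (simp add: s0f_def Hf_def)

lemma s0_nonneg:
  fixes g :: "real \<Rightarrow> real"
  assumes mono: "mono g" and lip: "\<forall>x y. \<bar>g x - g y\<bar> \<le> \<bar>x - y\<bar>" and a: "a > 0"
    and g0: "g 0 = 0"
  shows "s0f g a w \<ge> 0"
proof -
  have "afff g a 0 (g w) = 0" using g0 by (simp add: afff_def s0_zero)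
  then show ?thesis using aff_le_s0[OF mono lip a, of 0 w] by simp
qed

lemma sf_zero:
  fixes g :: "real \<Rightarrow> real"
  assumes mono: "mono g" and lip: "\<forall>x y. \<bar>g x - g y\<bar> \<le> \<bar>x - y\<bar>" and a: "a > 0"
    and g0: "g 0 = 0"
  shows "sf g a 0 = 0"
  using sf_at[OF mono lip a, of 0] g0 s0_zero[of g a] by simp

lemma ennreal_add_le: "ennreal (p + q) \<le> ennreal p + ennreal q"
proof (cases "p \<ge> 0 \<and> q \<ge> 0")
  case True then show ?thesis by (simp add: ennreal_plus)
next
  case False
  then show ?thesis
  proof (cases "p \<ge> 0")
    case True
    with False have "q < 0" by simp
    then have "ennreal (p + q) \<le> ennreal p" by (intro ennreal_leI) simp
    then show ?thesis by (simp add: add_increasing2)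
  next
    case F2: False
    then have "ennreal (p + q) \<le> ennreal q" by (intro ennreal_leI) simp
    then show ?thesis by (simp add: add_increasing)
  qed
qed

lemma sf_convex:
  assumes t: "0 < t" "t < 1"
  shows "sf g a ((1 - t) * x + t * y) \<le> ennreal (1 - t) * sf g a x + ennreal t * sf g a y"
  unfolding sf_def[of g a "(1 - t) * x + t * y"]
proof (rule SUP_least)
  fix w
  have id: "\<And>c s z. s + c * ((1 - t) * x + t * y - z) = (1 - t) * (s + c * (x - z)) + t * (s + c * (y - z))"
    by (simp add: algebra_simps)
  have "afff g a w ((1 - t) * x + t * y) = (1 - t) * afff g a w x + t * afff g a w y"
    unfolding afff_def by (rule id)
  then have "ennreal (afff g a w ((1 - t) * x + t * y))
      \<le> ennreal ((1 - t) * afff g a w x) + ennreal (t * afff g a w y)"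
    using ennreal_add_le by metis
  also have "\<dots> = ennreal (1 - t) * ennreal (afff g a w x) + ennreal t * ennreal (afff g a w y)"
    using t by (simp add: ennreal_mult')
  also have "\<dots> \<le> ennreal (1 - t) * sf g a x + ennreal t * sf g a y"
    by (intro add_mono mult_left_mono sf_lower) auto
  finally show "ennreal (afff g a w ((1 - t) * x + t * y)) \<le> ennreal (1 - t) * sf g a x + ennreal t * sf g a y" .
qed

lemma sf_lsc:
  assumes X: "X \<longlonglongrightarrow> x"
  shows "sf g a x \<le> liminf (\<lambda>n. sf g a (X n))"
  unfolding sf_def[of g a x]
proof (rule SUP_least)
  fix w
  have "(\<lambda>n. afff g a w (X n)) \<longlonglongrightarrow> afff g a w x"
    unfolding afff_def by (intro tendsto_intros X)
  then have "(\<lambda>n. ennreal (afff g a w (X n))) \<longlonglongrightarrow> ennreal (afff g a w x)"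
    by (rule tendsto_ennrealI)
  then have "liminf (\<lambda>n. ennreal (afff g a w (X n))) = ennreal (afff g a w x)"
    by (intro lim_imp_Liminf) auto
  moreover have "liminf (\<lambda>n. ennreal (afff g a w (X n))) \<le> liminf (\<lambda>n. sf g a (X n))"
    by (intro Liminf_mono always_eventually allI sf_lower)
  ultimately show "ennreal (afff g a w x) \<le> liminf (\<lambda>n. sf g a (X n))" by simp
qed



lemma prox_strict:
  fixes f :: "real \<Rightarrow> ennreal"
  assumes al: "\<alpha> > 0" and fy0: "f y0 = ennreal S0" and S0: "S0 \<ge> 0"
    and low: "\<And>y. ennreal (S0 + (x - y0) / \<alpha> * (y - y0)) \<le> f y"
    and ne: "y \<noteq> y0"
  shows "ennreal ((x - y0)\<^sup>2 / 2) + ennreal \<alpha> * f y0 < ennreal ((x - y)\<^sup>2 / 2) + ennreal \<alpha> * f y"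
proof (cases "f y = \<infinity>")
  case True
  have "ennreal \<alpha> * f y = \<infinity>" using True al by (simp add: ennreal_mult_eq_top_iff)
  moreover have "ennreal ((x - y0)\<^sup>2 / 2) + ennreal \<alpha> * f y0 < \<infinity>"
    using fy0 by (simp add: ennreal_mult_less_top)
  ultimately show ?thesis by simp
next
  case False
  then obtain r where r: "f y = ennreal r" "r \<ge> 0" by (cases "f y") auto
  have "ennreal (S0 + (x - y0) / \<alpha> * (y - y0)) \<le> ennreal r" using low[of y] r by simp
  then have rge: "r \<ge> S0 + (x - y0) / \<alpha> * (y - y0)"
    using r(2) by (simp add: ennreal_le_iff2) linarith
  have "\<alpha> * r \<ge> \<alpha> * (S0 + (x - y0) / \<alpha> * (y - y0))"
    using rge al by (intro mult_left_mono) auto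
  also have "\<alpha> * (S0 + (x - y0) / \<alpha> * (y - y0)) = \<alpha> * S0 + (x - y0) * (y - y0)"
    using al by (simp add: field_simps)
  finally have ar: "\<alpha> * r \<ge> \<alpha> * S0 + (x - y0) * (y - y0)" .
  have sq: "(x - y)\<^sup>2 = (x - y0)\<^sup>2 - 2 * (x - y0) * (y - y0) + (y - y0)\<^sup>2"
    by (simp add: power2_eq_square algebra_simps)
  have pos: "(y - y0)\<^sup>2 > 0" using ne by simp
  have lt: "(x - y0)\<^sup>2 / 2 + \<alpha> * S0 < (x - y)\<^sup>2 / 2 + \<alpha> * r"
    using ar sq pos by linarith
  have "ennreal ((x - y0)\<^sup>2 / 2) + ennreal \<alpha> * f y0 = ennreal ((x - y0)\<^sup>2 / 2 + \<alpha> * S0)"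
    using fy0 S0 al by (simp add: ennreal_mult ennreal_plus)
  moreover have "ennreal ((x - y)\<^sup>2 / 2) + ennreal \<alpha> * f y = ennreal ((x - y)\<^sup>2 / 2 + \<alpha> * r)"
    using r al by (simp add: ennreal_mult ennreal_plus)
  moreover have "ennreal ((x - y0)\<^sup>2 / 2 + \<alpha> * S0) < ennreal ((x - y)\<^sup>2 / 2 + \<alpha> * r)"
    using lt S0 al by (subst ennreal_less_iff) auto
  ultimately show ?thesis by simp
qed

lemma prox_argmin:
  fixes f :: "real \<Rightarrow> ennreal"
  assumes al: "\<alpha> > 0" and fy0: "f y0 = ennreal S0" and S0: "S0 \<ge> 0"
    and low: "\<And>y. ennreal (S0 + (x - y0) / \<alpha> * (y - y0)) \<le> f y"
  shows "argmin_on UNIV (\<lambda>y. ennreal ((x - y)\<^sup>2 / 2) + ennreal \<alpha> * f y) = {y0}"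
proof -
  have st: "\<And>y. y \<noteq> y0 \<Longrightarrow> ennreal ((x - y0)\<^sup>2 / 2) + ennreal \<alpha> * f y0 < ennreal ((x - y)\<^sup>2 / 2) + ennreal \<alpha> * f y"
    using prox_strict[OF al fy0 S0 low] by blast
  show ?thesis
    unfolding argmin_on_def
  proof (intro equalityI subsetI)
    fix y assume "y \<in> {y \<in> UNIV. \<forall>z\<in>UNIV. ennreal ((x - y)\<^sup>2 / 2) + ennreal \<alpha> * f y \<le> ennreal ((x - z)\<^sup>2 / 2) + ennreal \<alpha> * f z}"
    then have "ennreal ((x - y)\<^sup>2 / 2) + ennreal \<alpha> * f y \<le> ennreal ((x - y0)\<^sup>2 / 2) + ennreal \<alpha> * f y0" by blast
    then show "y \<in> {y0}" using st[of y] by force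
  next
    fix y assume "y \<in> {y0}"
    then show "y \<in> {y \<in> UNIV. \<forall>z\<in>UNIV. ennreal ((x - y)\<^sup>2 / 2) + ennreal \<alpha> * f y \<le> ennreal ((x - z)\<^sup>2 / 2) + ennreal \<alpha> * f z}"
      using st by (force intro: less_imp_le)
  qed
qed

lemma key_prod:
  fixes x y gx q a :: real
  assumes q: "0 < q" "q < 1" and a: "a > 0" and gx: "\<bar>gx\<bar> \<le> q * \<bar>x\<bar>"
    and qx: "q * \<bar>x\<bar> \<le> \<bar>y\<bar> / 2" and xy: "x * y \<ge> 0" and S0: "S0 \<ge> 0"
  shows "S0 + (x - gx) / a * (y - gx) \<ge> (1 - q) * \<bar>x\<bar> * \<bar>y\<bar> / (2 * a)"
proof -
  have "(x - gx) * (y - gx) \<ge> (1 - q) * \<bar>x\<bar> * (\<bar>y\<bar> / 2)"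
  proof (cases "x \<ge> 0")
    case True
    show ?thesis
    proof (cases "x = 0")
      case True then show ?thesis using gx by simp
    next
      case False
      with True have xp: "x > 0" by simp
      then have y0: "y \<ge> 0" using xy by (simp add: zero_le_mult_iff)
      have "x - gx \<ge> (1 - q) * x" using gx xp by (simp add: abs_le_iff algebra_simps)
      moreover have "y - gx \<ge> y / 2" using gx qx xp y0 by (simp add: abs_le_iff) 
      moreover have "(1 - q) * x \<ge> 0" using q xp by simp
      moreover have "y / 2 \<ge> 0" using y0 by simp
      ultimately have "(x - gx) * (y - gx) \<ge> (1 - q) * x * (y / 2)"
        by (intro mult_mono) auto
      then show ?thesis using xp y0 by simp
    qed
  next
    case False
    then have xn: "x < 0" by simp
    then have y0: "y \<le> 0" using xy by (simp add: zero_le_mult_iff)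
    have "gx - x \<ge> (1 - q) * (- x)" using gx xn by (simp add: abs_le_iff algebra_simps)
    moreover have "gx - y \<ge> - y / 2" using gx qx xn y0 by (simp add: abs_le_iff)
    moreover have "(1 - q) * (- x) \<ge> 0" using q xn by (intro mult_nonneg_nonneg) auto
    moreover have "- y / 2 \<ge> 0" using y0 by simp
    ultimately have "(gx - x) * (gx - y) \<ge> (1 - q) * (- x) * (- y / 2)"
      by (intro mult_mono) auto
    moreover have "(gx - x) * (gx - y) = (x - gx) * (y - gx)" by (simp add: algebra_simps)
    ultimately show ?thesis using xn y0 by simp
  qed
  then have "(x - gx) * (y - gx) / a \<ge> (1 - q) * \<bar>x\<bar> * (\<bar>y\<bar> / 2) / a"
    using a by (intro divide_right_mono) auto
  then show ?thesis using S0 by (simp add: field_simps)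
qed



lemma sf_lower_bound:
  fixes g :: "real \<Rightarrow> real"
  assumes mono: "mono g" and lip: "\<forall>x y. \<bar>g x - g y\<bar> \<le> \<bar>x - y\<bar>" and g0: "g 0 = 0"
    and k: "k > 0" and a: "a > 0" and b: "b > 0" and c: "c > 0"
    and A2: "\<forall>x. (\<forall>w. g w = c * k \<longrightarrow> \<bar>x\<bar> \<le> w) \<longrightarrow> \<bar>g x\<bar> \<le> k\<^sup>2 / (k\<^sup>2 + a * b) * \<bar>x\<bar>"
  shows "ennreal (b / 4 * min (t\<^sup>2) (2 * c * \<bar>t\<bar>)) \<le> sf g a (k * t)"
proof -
  define q where "q = k\<^sup>2 / (k\<^sup>2 + a * b)"
  have ab: "a * b > 0" using a b by simp
  have k2: "k\<^sup>2 > 0" using k by simp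
  have den: "k\<^sup>2 + a * b > 0" using k2 ab by linarith
  have q0: "q > 0" unfolding q_def by (rule divide_pos_pos[OF k2 den])
  have q1: "q < 1" unfolding q_def using den ab by (simp add: divide_less_eq)
  have qk: "q * (k\<^sup>2 + a * b) = k\<^sup>2" unfolding q_def using den by simp
  have qk2: "(1 - q) * k\<^sup>2 = a * b * q" using qk by (simp add: algebra_simps)
  have qq: "(1 - q) / q = a * b / k\<^sup>2"
    using frac_eq_eq[of q "k\<^sup>2" "1 - q" "a * b"] q0 k2 qk2 by simp
  have cont: "continuous_on UNIV g" using lip_cont[OF lip] .
  have P: "c * k / q \<le> w" if gw: "g w = c * k" for w
  proof -
    define P where "P = {v. g v = c * k}"
    have cl: "closed P" unfolding P_def by (rule closed_Collect_eq[OF cont continuous_on_const])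
    have ne: "P \<noteq> {}" using gw unfolding P_def by blast
    have nn: "0 \<le> v" if "v \<in> P" for v
    proof (rule ccontr)
      assume "\<not> 0 \<le> v"
      then have "g v \<le> g 0" using mono by (simp add: mono_def)
      then show False using that g0 mult_pos_pos[OF c k] unfolding P_def by simp
    qed
    have bb: "bdd_below P" using nn by (intro bdd_belowI) auto
    define m where "m = Inf P"
    have mP: "m \<in> P" unfolding m_def using closed_contains_Inf[OF ne bb cl] .
    have m0: "0 \<le> m" unfolding m_def using ne nn by (intro cInf_greatest) auto
    have mle: "m \<le> v" if "v \<in> P" for v unfolding m_def using that bb by (rule cInf_lower)
    have "\<forall>w. g w = c * k \<longrightarrow> \<bar>m\<bar> \<le> w" using mle m0 unfolding P_def by auto
    then have "\<bar>g m\<bar> \<le> q * \<bar>m\<bar>" using A2 unfolding q_def by blast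
    then have "c * k \<le> q * m" using mP m0 unfolding P_def by simp
    then have "c * k / q \<le> m" using q0 by (simp add: field_simps)
    moreover have "m \<le> w" using mle gw unfolding P_def by simp
    ultimately show ?thesis by simp
  qed
  have A2': "\<bar>g x\<bar> \<le> q * \<bar>x\<bar>" if "\<bar>x\<bar> \<le> c * k / q" for x
  proof -
    have "\<forall>w. g w = c * k \<longrightarrow> \<bar>x\<bar> \<le> w" using that P by force
    then show ?thesis using A2 unfolding q_def by blast
  qed
  have step: "ennreal ((1 - q) * \<bar>x\<bar> * \<bar>y\<bar> / (2 * a)) \<le> sf g a y"
    if "\<bar>x\<bar> \<le> c * k / q" "q * \<bar>x\<bar> \<le> \<bar>y\<bar> / 2" "x * y \<ge> 0" for x y
  proof -
    have "(1 - q) * \<bar>x\<bar> * \<bar>y\<bar> / (2 * a) \<le> s0f g a x + (x - g x) / a * (y - g x)"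
      by (rule key_prod[OF q0 q1 a A2'[OF that(1)] that(2) that(3) s0_nonneg[OF mono lip a g0]])
    then have "ennreal ((1 - q) * \<bar>x\<bar> * \<bar>y\<bar> / (2 * a)) \<le> ennreal (afff g a x y)"
      unfolding afff_def by (rule ennreal_leI)
    also have "\<dots> \<le> sf g a y" by (rule sf_lower)
    finally show ?thesis .
  qed
  show ?thesis
  proof (cases "\<bar>t\<bar> \<le> 2 * c")
    case True
    define x where "x = k * t / (2 * q)"
    have ax: "\<bar>x\<bar> = k * \<bar>t\<bar> / (2 * q)" unfolding x_def using k q0 by (simp add: abs_mult)
    have h1: "\<bar>x\<bar> \<le> c * k / q"
    proof -
      have "k * \<bar>t\<bar> \<le> k * (2 * c)" using True k by (intro mult_left_mono) auto
      then show ?thesis unfolding ax using q0 by (simp add: field_simps)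
    qed
    have h2: "q * \<bar>x\<bar> \<le> \<bar>k * t\<bar> / 2" unfolding ax using q0 k by (simp add: abs_mult)
    have h3: "x * (k * t) \<ge> 0"
    proof -
      have "x * (k * t) = (k * t)\<^sup>2 / (2 * q)" unfolding x_def by (simp add: power2_eq_square)
      then show ?thesis using q0 by simp
    qed
    have "(1 - q) * \<bar>x\<bar> * \<bar>k * t\<bar> / (2 * a) = ((1 - q) / q) * (k\<^sup>2 * t\<^sup>2) / (4 * a)"
      unfolding ax using q0 k by (simp add: abs_mult field_simps power2_eq_square)
    also have "\<dots> = b * t\<^sup>2 / 4" unfolding qq using a k2 by (simp add: field_simps)
    finally have v: "(1 - q) * \<bar>x\<bar> * \<bar>k * t\<bar> / (2 * a) = b * t\<^sup>2 / 4" .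
    have "b / 4 * min (t\<^sup>2) (2 * c * \<bar>t\<bar>) \<le> b * t\<^sup>2 / 4" using b by simp
    then have "ennreal (b / 4 * min (t\<^sup>2) (2 * c * \<bar>t\<bar>)) \<le> ennreal ((1 - q) * \<bar>x\<bar> * \<bar>k * t\<bar> / (2 * a))"
      unfolding v by (rule ennreal_leI)
    also have "\<dots> \<le> sf g a (k * t)" by (rule step[OF h1 h2 h3])
    finally show ?thesis .
  next
    case False
    define x where "x = (if t \<ge> 0 then c * k / q else - (c * k / q))"
    have ckq: "c * k / q > 0" using c k q0 by simp
    have ax: "\<bar>x\<bar> = c * k / q"
      by (cases "t \<ge> 0") (simp_all add: x_def abs_of_pos[OF ckq] del: abs_divide abs_mult)
    have h1: "\<bar>x\<bar> \<le> c * k / q" unfolding ax by simp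
    have h2: "q * \<bar>x\<bar> \<le> \<bar>k * t\<bar> / 2"
    proof -
      have "q * \<bar>x\<bar> = c * k" unfolding ax using q0 by simp
      moreover have "c * k \<le> k * \<bar>t\<bar> / 2" using False k by simp
      ultimately show ?thesis using k by (simp add: abs_mult)
    qed
    have h3: "x * (k * t) \<ge> 0"
    proof (cases "t \<ge> 0")
      case True
      have kt: "k * t \<ge> 0" using k True by simp
      have "x \<ge> 0" using True ckq unfolding x_def by simp
      then show ?thesis using kt by (rule mult_nonneg_nonneg)
    next
      case False
      then have "k * t \<le> 0" using k by (simp add: mult_nonneg_nonpos)
      moreover have "x \<le> 0" using False ckq unfolding x_def by simp
      ultimately show ?thesis using mult_nonpos_nonpos[of x "k * t"] by simp
    qed
    have "(1 - q) * \<bar>x\<bar> * \<bar>k * t\<bar> / (2 * a) = ((1 - q) / q) * (c * k\<^sup>2 * \<bar>t\<bar>) / (2 * a)"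
      unfolding ax using q0 k by (simp add: abs_mult field_simps power2_eq_square)
    also have "\<dots> = b * c * \<bar>t\<bar> / 2" unfolding qq using a k2 by (simp add: field_simps)
    finally have v: "(1 - q) * \<bar>x\<bar> * \<bar>k * t\<bar> / (2 * a) = b * c * \<bar>t\<bar> / 2" .
    have "b / 4 * min (t\<^sup>2) (2 * c * \<bar>t\<bar>) \<le> b / 4 * (2 * c * \<bar>t\<bar>)" using b
      by (intro mult_left_mono) auto
    then have "b / 4 * min (t\<^sup>2) (2 * c * \<bar>t\<bar>) \<le> b * c * \<bar>t\<bar> / 2" by simp
    then have "ennreal (b / 4 * min (t\<^sup>2) (2 * c * \<bar>t\<bar>)) \<le> ennreal ((1 - q) * \<bar>x\<bar> * \<bar>k * t\<bar> / (2 * a))"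
      unfolding v by (rule ennreal_leI)
    also have "\<dots> \<le> sf g a (k * t)" by (rule step[OF h1 h2 h3])
    finally show ?thesis .
  qed
qed



lemma infsum_ennreal_cmult:
  "(\<Sum>\<^sub>\<infinity>i\<in>A. (c::ennreal) * f i) = c * (\<Sum>\<^sub>\<infinity>i\<in>A. f i)"
  by (simp add: nonneg_infsum_complete SUP_mult_left_ennreal sum_distrib_left)

lemma ennreal_infsum_real:
  fixes f :: "'a \<Rightarrow> real"
  assumes "f summable_on A" "\<And>i. i \<in> A \<Longrightarrow> f i \<ge> 0"
  shows "ennreal (infsum f A) = (\<Sum>\<^sub>\<infinity>i\<in>A. ennreal (f i))"
proof -
  have "ennreal (infsum f A) = (SUP F\<in>{F. finite F \<and> F \<subseteq> A}. ennreal (sum f F))"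
    using infsum_nonneg_is_SUPREMUM_ennreal[OF assms] .
  also have "\<dots> = (SUP F\<in>{F. finite F \<and> F \<subseteq> A}. (\<Sum>i\<in>F. ennreal (f i)))"
    using assms(2) by (intro SUP_cong refl) (auto simp: subset_iff)
  also have "\<dots> = (\<Sum>\<^sub>\<infinity>i\<in>A. ennreal (f i))"
    by (simp add: nonneg_infsum_complete)
  finally show ?thesis .
qed

lemma le_infsum_real:
  fixes f :: "'a \<Rightarrow> real"
  assumes "f summable_on UNIV" "\<And>i. f i \<ge> 0"
  shows "f j \<le> infsum f UNIV"
proof -
  have "infsum f {j} \<le> infsum f UNIV"
    using assms by (intro infsum_mono_neutral) auto
  then show ?thesis by simp
qed

lemma infsum_split_ennreal:
  fixes h :: "'a \<Rightarrow> ennreal"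
  shows "(\<Sum>\<^sub>\<infinity>i. h i) = h j + (\<Sum>\<^sub>\<infinity>i\<in>-{j}. h i)"
proof -
  have "(\<Sum>\<^sub>\<infinity>i. h i) = (\<Sum>\<^sub>\<infinity>i\<in>{j} \<union> -{j}. h i)" by (simp add: Un_def)
  also have "\<dots> = (\<Sum>\<^sub>\<infinity>i\<in>{j}. h i) + (\<Sum>\<^sub>\<infinity>i\<in>-{j}. h i)"
    by (rule infsum_Un_disjoint) (auto intro: nonneg_summable_on_complete)
  finally show ?thesis by simp
qed

lemma liminf_add_ennreal:
  fixes f g :: "nat \<Rightarrow> ennreal"
  shows "liminf f + liminf g \<le> liminf (\<lambda>n. f n + g n)"
proof -
  have inc: "incseq (\<lambda>N. INF m\<in>{N..}. h m)" for h :: "nat \<Rightarrow> ennreal"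
    unfolding incseq_def by (auto intro!: INF_superset_mono)
  have "liminf f + liminf g = (SUP N. (INF m\<in>{N..}. f m) + (INF m\<in>{N..}. g m))"
    unfolding liminf_SUP_INF by (rule ennreal_SUP_add[OF inc inc, symmetric])
  also have "\<dots> \<le> (SUP N. INF m\<in>{N..}. f m + g m)"
    by (intro SUP_mono) (auto intro!: INF_greatest add_mono INF_lower)
  also have "\<dots> = liminf (\<lambda>n. f n + g n)" unfolding liminf_SUP_INF ..
  finally show ?thesis .
qed

lemma liminf_sum_ennreal:
  fixes f :: "nat \<Rightarrow> 'a \<Rightarrow> ennreal"
  assumes "finite F"
  shows "(\<Sum>i\<in>F. liminf (\<lambda>n. f n i)) \<le> liminf (\<lambda>n. \<Sum>i\<in>F. f n i)"
  using assms
proof (induction F rule: finite_induct)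
  case empty then show ?case by simp
next
  case (insert j F)
  have "(\<Sum>i\<in>insert j F. liminf (\<lambda>n. f n i)) = liminf (\<lambda>n. f n j) + (\<Sum>i\<in>F. liminf (\<lambda>n. f n i))"
    using insert by simp
  also have "\<dots> \<le> liminf (\<lambda>n. f n j) + liminf (\<lambda>n. \<Sum>i\<in>F. f n i)"
    using insert by (intro add_mono) auto
  also have "\<dots> \<le> liminf (\<lambda>n. f n j + (\<Sum>i\<in>F. f n i))" by (rule liminf_add_ennreal)
  also have "\<dots> = liminf (\<lambda>n. \<Sum>i\<in>insert j F. f n i)" using insert by simp
  finally show ?case .
qed

lemma fatou_infsum_ennreal:
  fixes f :: "nat \<Rightarrow> 'a \<Rightarrow> ennreal"
  shows "(\<Sum>\<^sub>\<infinity>i. liminf (\<lambda>n. f n i)) \<le> liminf (\<lambda>n. \<Sum>\<^sub>\<infinity>i. f n i)"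
proof -
  have "(\<Sum>\<^sub>\<infinity>i. liminf (\<lambda>n. f n i)) = (SUP F\<in>{F. finite F \<and> F \<subseteq> UNIV}. \<Sum>i\<in>F. liminf (\<lambda>n. f n i))"
    by (simp add: nonneg_infsum_complete)
  also have "\<dots> \<le> liminf (\<lambda>n. \<Sum>\<^sub>\<infinity>i. f n i)"
  proof (rule SUP_least)
    fix F :: "'a set" assume F: "F \<in> {F. finite F \<and> F \<subseteq> UNIV}"
    have "(\<Sum>i\<in>F. liminf (\<lambda>n. f n i)) \<le> liminf (\<lambda>n. \<Sum>i\<in>F. f n i)"
      using F by (intro liminf_sum_ennreal) auto
    also have "\<dots> \<le> liminf (\<lambda>n. \<Sum>\<^sub>\<infinity>i. f n i)"
    proof (intro Liminf_mono always_eventually allI)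
      fix n
      show "(\<Sum>i\<in>F. f n i) \<le> (\<Sum>\<^sub>\<infinity>i. f n i)"
        using F by (simp add: nonneg_infsum_complete) (intro SUP_upper, auto)
    qed
    finally show "(\<Sum>i\<in>F. liminf (\<lambda>n. f n i)) \<le> liminf (\<lambda>n. \<Sum>\<^sub>\<infinity>i. f n i)" .
  qed
  finally show ?thesis .
qed



definition psi :: "real \<Rightarrow> real \<Rightarrow> real" where
  "psi C u = min u (C * sqrt u)"

lemma psi_nonneg: "C \<ge> 0 \<Longrightarrow> u \<ge> 0 \<Longrightarrow> psi C u \<ge> 0"
  by (simp add: psi_def)

lemma psi_mono: "C \<ge> 0 \<Longrightarrow> u \<le> v \<Longrightarrow> psi C u \<le> psi C v"
  unfolding psi_def by (intro min.mono mult_left_mono real_sqrt_le_mono) auto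

lemma psi_zero: "psi C 0 = 0" by (simp add: psi_def)

lemma psi_sq: "C \<ge> 0 \<Longrightarrow> psi C (t\<^sup>2) = min (t\<^sup>2) (C * \<bar>t\<bar>)"
  by (simp add: psi_def)

lemma psi_mixed:
  fixes u v C :: real
  assumes C: "C > 0" and u: "u \<ge> 0" and v: "v \<ge> 0" and b: "sqrt v \<le> C" and a: "sqrt u > C"
  shows "C * sqrt (u + v) \<le> C * sqrt u + v"
proof -
  have sa: "(sqrt u)\<^sup>2 = u" using u by simp
  have "C * C * v \<le> 2 * C * sqrt u * v"
  proof -
    have "C * C \<le> 2 * C * sqrt u" using a C by (simp add: mult_left_mono)
    then show ?thesis using v by (intro mult_right_mono) auto
  qed
  then have "(C * sqrt (u + v))\<^sup>2 \<le> (C * sqrt u + v)\<^sup>2"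
    using u v sa by (simp add: power2_eq_square algebra_simps)
      (smt (verit) mult_nonneg_nonneg v)
  moreover have "C * sqrt u + v \<ge> 0" using C u v by simp
  ultimately show ?thesis by (rule power2_le_imp_le)
qed

lemma psi_subadd:
  fixes u v C :: real
  assumes C: "C > 0" and u: "u \<ge> 0" and v: "v \<ge> 0"
  shows "psi C (u + v) \<le> psi C u + psi C v"
proof -
  have sa: "sqrt u * sqrt u = u" using u by simp
  have sb: "sqrt v * sqrt v = v" using v by simp
  have ssum: "sqrt (u + v) \<le> sqrt u + sqrt v" by (rule sqrt_add_le_add_sqrt[OF u v])
  have pu: "psi C u = (if sqrt u \<le> C then u else C * sqrt u)"
  proof (cases "sqrt u \<le> C")
    case True
    then have "u \<le> C * sqrt u" using sa u by (metis mult_right_mono real_sqrt_ge_zero)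
    then show ?thesis using True by (simp add: psi_def)
  next
    case False
    then have "C * sqrt u < u" using sa C by (metis mult_strict_right_mono not_le real_sqrt_ge_zero
      less_le_trans order.strict_iff_not)
    then show ?thesis using False by (simp add: psi_def)
  qed
  have pv: "psi C v = (if sqrt v \<le> C then v else C * sqrt v)"
  proof (cases "sqrt v \<le> C")
    case True
    then have "v \<le> C * sqrt v" using sb v by (metis mult_right_mono real_sqrt_ge_zero)
    then show ?thesis using True by (simp add: psi_def)
  next
    case False
    then have "C * sqrt v < v" using sb C by (metis mult_strict_right_mono not_le real_sqrt_ge_zero
      less_le_trans order.strict_iff_not)
    then show ?thesis using False by (simp add: psi_def)
  qed
  have p1: "psi C (u + v) \<le> u + v" by (simp add: psi_def)
  have p2: "psi C (u + v) \<le> C * sqrt (u + v)" by (simp add: psi_def)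
  have p3: "C * sqrt (u + v) \<le> C * sqrt u + C * sqrt v"
    using ssum C by (simp add: distrib_left[symmetric] mult_left_mono)
  show ?thesis
  proof (cases "sqrt u \<le> C")
    case True
    show ?thesis
    proof (cases "sqrt v \<le> C")
      case True
      then show ?thesis using \<open>sqrt u \<le> C\<close> pu pv p1 by simp
    next
      case False
      have "C * sqrt (u + v) \<le> C * sqrt v + u"
        using psi_mixed[OF C v u \<open>sqrt u \<le> C\<close>] False by (simp add: add.commute)
      then show ?thesis using True False pu pv p2 by simp
    qed
  next
    case False
    show ?thesis
    proof (cases "sqrt v \<le> C")
      case True
      have "C * sqrt (u + v) \<le> C * sqrt u + v"
        using psi_mixed[OF C u v True] False by simp
      then show ?thesis using True False pu pv p2 by simp
    next
      case F2: False
      then show ?thesis using False pu pv p2 p3 by simp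
    qed
  qed
qed

lemma psi_sum:
  fixes u :: "'a \<Rightarrow> real"
  assumes C: "C > 0" and "finite F" and nn: "\<And>i. u i \<ge> 0"
  shows "psi C (\<Sum>i\<in>F. u i) \<le> (\<Sum>i\<in>F. psi C (u i))"
  using assms(2)
proof (induction F rule: finite_induct)
  case empty then show ?case by (simp add: psi_zero)
next
  case (insert j F)
  have "psi C (\<Sum>i\<in>insert j F. u i) = psi C (u j + (\<Sum>i\<in>F. u i))" using insert by simp
  also have "\<dots> \<le> psi C (u j) + psi C (\<Sum>i\<in>F. u i)"
    using nn by (intro psi_subadd C) (auto intro: sum_nonneg)
  also have "\<dots> \<le> psi C (u j) + (\<Sum>i\<in>F. psi C (u i))" using insert by simp
  also have "\<dots> = (\<Sum>i\<in>insert j F. psi C (u i))" using insert by simp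
  finally show ?case .
qed

lemma t_sq_bound:
  fixes t c :: real
  assumes c: "c > 0"
  shows "t\<^sup>2 \<le> min (t\<^sup>2) (2 * c * \<bar>t\<bar>) + (min (t\<^sup>2) (2 * c * \<bar>t\<bar>))\<^sup>2 / (4 * c\<^sup>2)"
proof (cases "t\<^sup>2 \<le> 2 * c * \<bar>t\<bar>")
  case True
  then show ?thesis using c by simp
next
  case False
  then have "min (t\<^sup>2) (2 * c * \<bar>t\<bar>) = 2 * c * \<bar>t\<bar>" by simp
  moreover have "(2 * c * \<bar>t\<bar>)\<^sup>2 / (4 * c\<^sup>2) = t\<^sup>2" using c by (simp add: power2_eq_square field_simps)
  moreover have "2 * c * \<bar>t\<bar> \<ge> 0" using c by simp
  ultimately show ?thesis by simp
qed

lemma l2_infsum_nonneg: "(\<Sum>\<^sub>\<infinity>i. (x i)\<^sup>2) \<ge> (0::real)"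
  by (rule infsum_nonneg) simp

lemma l2norm_sq: "(l2norm x)\<^sup>2 = (\<Sum>\<^sub>\<infinity>i. (x i)\<^sup>2)"
  unfolding l2norm_def using l2_infsum_nonneg[of x] by simp

lemma psi_lower_l2:
  fixes x :: "'i \<Rightarrow> real"
  assumes C: "C > 0" and B: "B \<ge> 0" and x: "x \<in> l2"
  shows "ennreal (B * psi C ((l2norm x)\<^sup>2 / 2)) \<le> (\<Sum>\<^sub>\<infinity>i. ennreal (B * psi C ((x i)\<^sup>2)))"
proof -
  define S where "S = (\<Sum>\<^sub>\<infinity>i. (x i)\<^sup>2)"
  have S0: "S \<ge> 0" unfolding S_def by (rule l2_infsum_nonneg)
  have sm: "(\<lambda>i. (x i)\<^sup>2) summable_on UNIV" using x by (simp add: l2_def)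
  show ?thesis
  proof (cases "S = 0")
    case True
    then show ?thesis by (simp add: l2norm_sq S_def[symmetric] psi_zero)
  next
    case False
    with S0 have Sp: "S > 0" by simp
    obtain F where F: "finite F" "dist (\<Sum>i\<in>F. (x i)\<^sup>2) S \<le> S / 2"
      using infsum_finite_approximation[OF sm, of "S/2"] Sp unfolding S_def by auto
    have "\<bar>(\<Sum>i\<in>F. (x i)\<^sup>2) - S\<bar> \<le> S / 2" using F(2) by (simp only: dist_real_def)
    then have "S / 2 \<le> (\<Sum>i\<in>F. (x i)\<^sup>2)" by arith
    then have "psi C (S / 2) \<le> psi C (\<Sum>i\<in>F. (x i)\<^sup>2)" using C by (intro psi_mono) auto
    also have "\<dots> \<le> (\<Sum>i\<in>F. psi C ((x i)\<^sup>2))" by (rule psi_sum[OF C F(1)]) simp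
    finally have "B * psi C (S / 2) \<le> B * (\<Sum>i\<in>F. psi C ((x i)\<^sup>2))" using B by (rule mult_left_mono)
    then have "ennreal (B * psi C (S / 2)) \<le> ennreal (\<Sum>i\<in>F. B * psi C ((x i)\<^sup>2))"
      by (intro ennreal_leI) (simp add: sum_distrib_left)
    also have "\<dots> = (\<Sum>i\<in>F. ennreal (B * psi C ((x i)\<^sup>2)))"
      using B C by (intro sum_ennreal[symmetric]) (auto intro!: mult_nonneg_nonneg psi_nonneg)
    also have "\<dots> \<le> (\<Sum>\<^sub>\<infinity>i. ennreal (B * psi C ((x i)\<^sup>2)))"
      using F(1) by (simp add: nonneg_infsum_complete) (intro SUP_upper, auto)
    finally show ?thesis by (simp add: l2norm_sq S_def)
  qed
qed

lemma psi_at_top: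
  assumes C: "C > 0" and B: "B > 0" and lim: "filterlim (\<lambda>n. l2norm (X n)) at_top sequentially"
  shows "((\<lambda>n. ennreal (B * psi C ((l2norm (X n))\<^sup>2 / 2))) \<longlongrightarrow> top) sequentially"
  unfolding ennreal_tendsto_top_eq_at_top filterlim_at_top
proof
  fix Z :: real
  define Z' where "Z' = max 0 (Z / B)"
  define N where "N = max Z' ((Z' / C)\<^sup>2)"
  have Z'0: "Z' \<ge> 0" by (simp add: Z'_def)
  have ev: "eventually (\<lambda>n. sqrt (2 * N) \<le> l2norm (X n)) sequentially"
    using lim by (simp add: filterlim_at_top)
  show "eventually (\<lambda>n. Z \<le> B * psi C ((l2norm (X n))\<^sup>2 / 2)) sequentially"
  proof (rule eventually_mono[OF ev])
    fix n assume h: "sqrt (2 * N) \<le> l2norm (X n)"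
    have N0: "N \<ge> 0" unfolding N_def using Z'0 by (metis max.coboundedI1)
    have "(sqrt (2 * N))\<^sup>2 \<le> (l2norm (X n))\<^sup>2" using h N0 by (intro power_mono) auto
    then have uN: "N \<le> (l2norm (X n))\<^sup>2 / 2" using N0 by simp
    define u where "u = (l2norm (X n))\<^sup>2 / 2"
    have u0: "u \<ge> 0" unfolding u_def by simp
    have "Z' \<le> u" using uN unfolding u_def N_def by simp
    moreover have "Z' \<le> C * sqrt u"
    proof -
      have "(Z' / C)\<^sup>2 \<le> u" using uN unfolding u_def N_def by simp
      then have "sqrt ((Z' / C)\<^sup>2) \<le> sqrt u" by (rule real_sqrt_le_mono)
      then have "Z' / C \<le> sqrt u" using Z'0 C by simp
      then show ?thesis using C by (simp add: field_simps)
    qed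
    ultimately have "Z' \<le> psi C u" by (simp add: psi_def)
    then have "B * Z' \<le> B * psi C u" using B by simp
    moreover have "Z \<le> B * Z'" using B unfolding Z'_def by (simp add: field_simps max_def)
    ultimately show "Z \<le> B * psi C ((l2norm (X n))\<^sup>2 / 2)" unfolding u_def by linarith
  qed
qed



lemma l2_summable: "x \<in> l2 \<Longrightarrow> (\<lambda>i. (x i)\<^sup>2) summable_on UNIV"
  by (simp add: l2_def)

lemma l2_compare:
  assumes "x \<in> l2" "\<And>i. (y i)\<^sup>2 \<le> C * (x i)\<^sup>2"
  shows "y \<in> l2"
proof -
  have "(\<lambda>i. C * (x i)\<^sup>2) summable_on UNIV"
    using assms(1) by (intro summable_on_cmult_right) (simp add: l2_def)
  then show ?thesis unfolding l2_def mem_Collect_eq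
    by (rule summable_on_comparison_test) (use assms(2) in auto)
qed

lemma l2_diff:
  assumes "x \<in> l2" "y \<in> l2"
  shows "(\<lambda>i. x i - y i) \<in> l2"
proof -
  have "(\<lambda>i. 2 * (x i)\<^sup>2 + 2 * (y i)\<^sup>2) summable_on UNIV"
    using assms by (intro summable_on_add summable_on_cmult_right) (simp_all add: l2_def)
  moreover have "(x i - y i)\<^sup>2 \<le> 2 * (x i)\<^sup>2 + 2 * (y i)\<^sup>2" for i
  proof -
    have "0 \<le> (x i + y i)\<^sup>2" by simp
    then show ?thesis by (simp add: power2_eq_square algebra_simps)
  qed
  ultimately show ?thesis unfolding l2_def mem_Collect_eq
    by (rule summable_on_comparison_test) auto
qed

lemma l2_scale:
  assumes "x \<in> l2" "\<And>i. \<bar>a i\<bar> \<le> K"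
  shows "(\<lambda>i. a i * x i) \<in> l2"
proof (rule l2_compare[OF assms(1), of _ "K\<^sup>2"])
  fix i
  have "\<bar>a i\<bar>\<^sup>2 \<le> K\<^sup>2" using assms(2)[of i] by (intro power_mono) auto
  then have "(a i)\<^sup>2 * (x i)\<^sup>2 \<le> K\<^sup>2 * (x i)\<^sup>2" by (intro mult_right_mono) auto
  then show "(a i * x i)\<^sup>2 \<le> K\<^sup>2 * (x i)\<^sup>2" by (simp add: power_mult_distrib)
qed

lemma l2_term_le:
  assumes "x \<in> l2"
  shows "(x j)\<^sup>2 \<le> (\<Sum>\<^sub>\<infinity>i. (x i)\<^sup>2)"
  using le_infsum_real[of "\<lambda>i. (x i)\<^sup>2" j] assms by (simp add: l2_def)

lemma l2_coord_le:
  assumes "x \<in> l2"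
  shows "\<bar>x j\<bar> \<le> l2norm x"
proof -
  have "sqrt ((x j)\<^sup>2) \<le> sqrt (\<Sum>\<^sub>\<infinity>i. (x i)\<^sup>2)" using l2_term_le[OF assms] by (rule real_sqrt_le_mono)
  then show ?thesis by (simp add: l2norm_def)
qed

lemma zero_l2: "(\<lambda>i. 0) \<in> l2" by (simp add: l2_def)



lemma dom_part:
  fixes s :: "'i \<Rightarrow> real \<Rightarrow> ennreal" and P :: "'i \<Rightarrow> real \<Rightarrow> real" and \<kappa> :: "'i \<Rightarrow> real"
  assumes kpos: "\<forall>i. \<kappa> i > 0" and al: "\<alpha> > 0" and b: "b > 0" and c: "c > 0"
    and s0: "\<forall>i. s i 0 = 0"
    and LB: "\<forall>i t. ennreal (b / 4 * min (t\<^sup>2) (2 * c * \<bar>t\<bar>)) \<le> s i (\<kappa> i * t)"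
    and opt: "\<forall>i x y. ennreal ((x - P i x)\<^sup>2 / 2) + ennreal \<alpha> * s i (P i x)
                 \<le> ennreal ((x - y)\<^sup>2 / 2) + ennreal \<alpha> * s i y"
    and z: "z \<in> l2"
  shows "(\<lambda>i. P i (z i) / \<kappa> i) \<in> l2"
proof (rule l2_compare[OF z])
  fix i
  define Z where "Z = (\<Sum>\<^sub>\<infinity>i. (z i)\<^sup>2)"
  define D where "D = 2 / (\<alpha> * b)"
  define t where "t = P i (z i) / \<kappa> i"
  define m where "m = min (t\<^sup>2) (2 * c * \<bar>t\<bar>)"
  have m0: "m \<ge> 0" using c by (simp add: m_def)
  have D0: "D \<ge> 0" using al b by (simp add: D_def)
  have kt: "\<kappa> i * t = P i (z i)" using kpos[rule_format, of i] by (simp add: t_def)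
  have l: "ennreal (b / 4 * m) \<le> s i (P i (z i))" using LB kt unfolding m_def by metis
  have "ennreal \<alpha> * ennreal (b / 4 * m) \<le> ennreal \<alpha> * s i (P i (z i))"
    using l by (rule mult_left_mono) simp
  also have "\<dots> \<le> ennreal ((z i - P i (z i))\<^sup>2 / 2) + ennreal \<alpha> * s i (P i (z i))" by simp
  also have "\<dots> \<le> ennreal ((z i - 0)\<^sup>2 / 2) + ennreal \<alpha> * s i 0" using opt by blast
  also have "\<dots> = ennreal ((z i)\<^sup>2 / 2)" using s0 by simp
  finally have le1: "ennreal \<alpha> * ennreal (b / 4 * m) \<le> ennreal ((z i)\<^sup>2 / 2)" .
  have "ennreal \<alpha> * ennreal (b / 4 * m) = ennreal (\<alpha> * (b / 4 * m))"
    using al b m0 by (intro ennreal_mult[symmetric]) auto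
  with le1 have "ennreal (\<alpha> * (b / 4 * m)) \<le> ennreal ((z i)\<^sup>2 / 2)" by simp
  then have "\<alpha> * (b / 4 * m) \<le> (z i)\<^sup>2 / 2" by (simp add: ennreal_le_iff)
  then have mD: "m \<le> D * (z i)\<^sup>2" using al b by (simp add: D_def field_simps)
  have zZ: "(z i)\<^sup>2 \<le> Z" unfolding Z_def by (rule l2_term_le[OF z])
  have c2: "4 * c\<^sup>2 > 0" using c by simp
  have "t\<^sup>2 \<le> m + m\<^sup>2 / (4 * c\<^sup>2)" using t_sq_bound[OF c, of t] by (simp add: m_def)
  moreover have "m\<^sup>2 \<le> (D * (z i)\<^sup>2)\<^sup>2" using m0 mD by (intro power_mono) auto
  moreover have "(D * (z i)\<^sup>2)\<^sup>2 \<le> D\<^sup>2 * Z * (z i)\<^sup>2"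
  proof -
    have "(D * (z i)\<^sup>2)\<^sup>2 = (D\<^sup>2 * (z i)\<^sup>2) * (z i)\<^sup>2" by (simp add: power2_eq_square algebra_simps)
    also have "\<dots> \<le> (D\<^sup>2 * Z) * (z i)\<^sup>2"
      using zZ by (intro mult_right_mono mult_left_mono) auto
    finally show ?thesis .
  qed
  ultimately have "t\<^sup>2 \<le> D * (z i)\<^sup>2 + D\<^sup>2 * Z * (z i)\<^sup>2 / (4 * c\<^sup>2)"
    using mD c2 by (smt (verit) divide_right_mono)
  also have "\<dots> = (D + D\<^sup>2 * Z / (4 * c\<^sup>2)) * (z i)\<^sup>2" using c2 by (simp add: field_simps)
  finally show "(P i (z i) / \<kappa> i)\<^sup>2 \<le> (D + D\<^sup>2 * Z / (4 * c\<^sup>2)) * (z i)\<^sup>2" by (simp add: t_def)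
qed



lemma argmin_part:
  fixes s :: "'i \<Rightarrow> real \<Rightarrow> ennreal" and P :: "'i \<Rightarrow> real \<Rightarrow> real" and \<kappa> :: "'i \<Rightarrow> real"
  assumes kpos: "\<forall>i. \<kappa> i > 0" and K: "\<forall>i. \<kappa> i \<le> K" and al: "\<alpha> > 0"
    and strict: "\<forall>i x y. y \<noteq> P i x \<longrightarrow> ennreal ((x - P i x)\<^sup>2 / 2) + ennreal \<alpha> * s i (P i x)
                 < ennreal ((x - y)\<^sup>2 / 2) + ennreal \<alpha> * s i y"
    and s0: "\<forall>i. s i 0 = 0" and z: "z \<in> l2" and xs: "(\<lambda>i. P i (z i) / \<kappa> i) \<in> l2"
  shows "argmin_on l2 (\<lambda>x. ennreal ((l2norm (\<lambda>i. Mk \<kappa> x i - z i))\<^sup>2 / 2)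
            + ennreal \<alpha> * (\<Sum>\<^sub>\<infinity>i. s i (\<kappa> i * x i))) = {(\<lambda>i. P i (z i) / \<kappa> i)}"
proof -
  define f where "f i y = ennreal ((z i - y)\<^sup>2 / 2) + ennreal \<alpha> * s i y" for i y
  define J where "J x = ennreal ((l2norm (\<lambda>i. Mk \<kappa> x i - z i))\<^sup>2 / 2)
            + ennreal \<alpha> * (\<Sum>\<^sub>\<infinity>i. s i (\<kappa> i * x i))" for x
  define xs where "xs = (\<lambda>i. P i (z i) / \<kappa> i)"
  have le: "f i (P i (z i)) \<le> f i y" for i y
    using strict[rule_format, of y i "z i"] unfolding f_def by (cases "y = P i (z i)") auto
  have lt: "y \<noteq> P i (z i) \<Longrightarrow> f i (P i (z i)) < f i y" for i y
    using strict unfolding f_def by blast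
  have kxs: "\<kappa> i * xs i = P i (z i)" for i using kpos[rule_format, of i] by (simp add: xs_def)
  have Jeq: "J x = (\<Sum>\<^sub>\<infinity>i. f i (\<kappa> i * x i))" if x: "x \<in> l2" for x
  proof -
    have kx: "(\<lambda>i. \<kappa> i * x i) \<in> l2"
      using x by (rule l2_scale) (use kpos K in \<open>auto simp: abs_of_pos less_imp_le\<close>)
    have v: "(\<lambda>i. \<kappa> i * x i - z i) \<in> l2" using l2_diff[OF kx z] .
    have sm: "(\<lambda>i. (\<kappa> i * x i - z i)\<^sup>2 * (1/2)) summable_on UNIV"
      using v by (intro summable_on_cmult_left) (simp add: l2_def)
    have "(l2norm (\<lambda>i. Mk \<kappa> x i - z i))\<^sup>2 / 2 = (\<Sum>\<^sub>\<infinity>i. (\<kappa> i * x i - z i)\<^sup>2) * (1/2)"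
      by (simp add: l2norm_sq Mk_def)
    also have "\<dots> = (\<Sum>\<^sub>\<infinity>i. (\<kappa> i * x i - z i)\<^sup>2 * (1/2))" by (rule infsum_cmult_left'[symmetric])
    finally have "ennreal ((l2norm (\<lambda>i. Mk \<kappa> x i - z i))\<^sup>2 / 2)
        = (\<Sum>\<^sub>\<infinity>i. ennreal ((\<kappa> i * x i - z i)\<^sup>2 * (1/2)))"
      using ennreal_infsum_real[OF sm] by simp
    also have "\<dots> = (\<Sum>\<^sub>\<infinity>i. ennreal ((z i - \<kappa> i * x i)\<^sup>2 / 2))"
      by (simp add: power2_commute)
    finally have e1: "ennreal ((l2norm (\<lambda>i. Mk \<kappa> x i - z i))\<^sup>2 / 2)
        = (\<Sum>\<^sub>\<infinity>i. ennreal ((z i - \<kappa> i * x i)\<^sup>2 / 2))" .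
    have e2: "ennreal \<alpha> * (\<Sum>\<^sub>\<infinity>i. s i (\<kappa> i * x i)) = (\<Sum>\<^sub>\<infinity>i. ennreal \<alpha> * s i (\<kappa> i * x i))"
      by (rule infsum_ennreal_cmult[symmetric])
    have "J x = (\<Sum>\<^sub>\<infinity>i. ennreal ((z i - \<kappa> i * x i)\<^sup>2 / 2)) + (\<Sum>\<^sub>\<infinity>i. ennreal \<alpha> * s i (\<kappa> i * x i))"
      unfolding J_def e1 e2 ..
    also have "\<dots> = (\<Sum>\<^sub>\<infinity>i. ennreal ((z i - \<kappa> i * x i)\<^sup>2 / 2) + ennreal \<alpha> * s i (\<kappa> i * x i))"
      by (rule infsum_add[symmetric]) (auto intro: nonneg_summable_on_complete)
    finally show ?thesis unfolding f_def .
  qed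
  have Jxs: "J xs = (\<Sum>\<^sub>\<infinity>i. f i (P i (z i)))" using Jeq[OF xs[folded xs_def]] kxs by simp
  have Jfin: "J xs < \<infinity>"
  proof -
    have "J xs \<le> (\<Sum>\<^sub>\<infinity>i. f i 0)" unfolding Jxs
      by (intro infsum_mono le) (auto intro: nonneg_summable_on_complete)
    also have "\<dots> = (\<Sum>\<^sub>\<infinity>i. ennreal ((z i)\<^sup>2 / 2))" using s0 by (simp add: f_def)
    also have "\<dots> = ennreal (\<Sum>\<^sub>\<infinity>i. (z i)\<^sup>2 / 2)"
    proof -
      have "(\<lambda>i. (z i)\<^sup>2 * (1/2)) summable_on UNIV"
        using z by (intro summable_on_cmult_left) (simp add: l2_def)
      then have "(\<lambda>i. (z i)\<^sup>2 / 2) summable_on UNIV" by simp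
      then show ?thesis by (intro ennreal_infsum_real[symmetric]) auto
    qed
    also have "\<dots> < \<infinity>" by simp
    finally show ?thesis .
  qed
  have min: "J xs \<le> J x" if "x \<in> l2" for x
    unfolding Jxs Jeq[OF that] by (intro infsum_mono le) (auto intro: nonneg_summable_on_complete)
  have smin: "J xs < J x" if x: "x \<in> l2" and ne: "x \<noteq> xs" for x
  proof -
    obtain j where j: "x j \<noteq> xs j" using ne by blast
    have nj: "\<kappa> j * x j \<noteq> P j (z j)"
    proof
      assume "\<kappa> j * x j = P j (z j)"
      then have "\<kappa> j * x j = \<kappa> j * xs j" using kxs by simp
      then show False using j kpos[rule_format, of j] by simp
    qed
    define Rx where "Rx = (\<Sum>\<^sub>\<infinity>i\<in>-{j}. f i (\<kappa> i * x i))"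
    define Rs where "Rs = (\<Sum>\<^sub>\<infinity>i\<in>-{j}. f i (P i (z i)))"
    have Jx: "J x = f j (\<kappa> j * x j) + Rx" unfolding Jeq[OF x] Rx_def by (rule infsum_split_ennreal)
    have Js: "J xs = f j (P j (z j)) + Rs" unfolding Jxs Rs_def by (rule infsum_split_ennreal)
    have RR: "Rs \<le> Rx" unfolding Rs_def Rx_def
      by (intro infsum_mono le) (auto intro: nonneg_summable_on_complete)
    have Rsfin: "Rs \<noteq> \<infinity>"
    proof -
      have "Rs \<le> J xs" unfolding Js by simp
      then show ?thesis using Jfin by auto
    qed
    have "Rs + f j (P j (z j)) < Rs + f j (\<kappa> j * x j)"
      using Rsfin lt[OF nj] by (simp add: ennreal_add_left_cancel_less)
    also have "\<dots> \<le> Rx + f j (\<kappa> j * x j)" using RR by (rule add_right_mono)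
    finally show ?thesis unfolding Jx Js by (simp add: add.commute)
  qed
  have "argmin_on l2 J = {xs}"
    unfolding argmin_on_def
  proof (intro equalityI subsetI)
    fix x assume "x \<in> {y \<in> l2. \<forall>z\<in>l2. J y \<le> J z}"
    then have x: "x \<in> l2" "J x \<le> J xs" using xs unfolding xs_def by auto
    then show "x \<in> {xs}" using smin[OF x(1)] by force
  next
    fix x assume "x \<in> {xs}"
    then show "x \<in> {y \<in> l2. \<forall>z\<in>l2. J y \<le> J z}" using xs min unfolding xs_def by auto
  qed
  then show ?thesis unfolding J_def xs_def .
qed



theorem lemma4p2:
  fixes \<phi> :: "real \<Rightarrow> real \<Rightarrow> real \<Rightarrow> real"
    and \<kappa> :: "'i::countable \<Rightarrow> real"
  assumes kpos: "\<forall>i. \<kappa> i > 0"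
    and kbdd: "\<exists>K. \<forall>i. \<kappa> i \<le> K"
    and filt: "nonlinear_reg_filter \<phi>"
    and A: "assumption_A \<phi>"
  shows "(\<forall>\<alpha>>0. dom_Mk_pinv_Phi \<phi> \<alpha> \<kappa> = l2) \<and>
    (\<exists>s :: 'i \<Rightarrow> real \<Rightarrow> ennreal.
       (\<forall>i. proper_fun UNIV (s i) \<and> convex_fun_on UNIV (s i) \<and> lsc_real (s i) \<and> s i 0 = 0 \<and>
            (\<forall>\<alpha>>0. \<forall>x. argmin_on UNIV (\<lambda>y. ennreal ((x - y)\<^sup>2 / 2) + ennreal \<alpha> * s i y)
                         = {\<phi> \<alpha> (\<kappa> i) x})) \<and>
       (let R = (\<lambda>x. \<Sum>\<^sub>\<infinity>i. s i (\<kappa> i * x i)) in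
          proper_fun l2 R \<and> convex_l2 R \<and> lsc_l2 R \<and> norm_coercive_l2 R \<and>
          (\<forall>\<alpha>>0. \<forall>z\<in>l2.
             argmin_on l2 (\<lambda>x. ennreal ((l2norm (\<lambda>i. Mk \<kappa> x i - z i))\<^sup>2 / 2) + ennreal \<alpha> * R x)
               = {Mk_pinv \<kappa> (Phi \<phi> \<alpha> \<kappa> z)})))"
proof -
  obtain K where K: "\<forall>i. \<kappa> i \<le> K" using kbdd by blast
  have A1: "\<forall>k>0. \<forall>y. \<forall>\<alpha>>0. \<forall>\<beta>>0.
        {(w - y) / \<alpha> | w. \<phi> \<alpha> k w = y} = {(w - y) / \<beta> | w. \<phi> \<beta> k w = y}"
    using A unfolding assumption_A_def by blast
  obtain a0 b c where a0: "a0 > 0" and b: "b > 0" and c: "c > 0" and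
    A2: "\<forall>k>0. \<forall>x. (\<forall>w. \<phi> a0 k w = c * k \<longrightarrow> \<bar>x\<bar> \<le> w) \<longrightarrow>
        \<bar>\<phi> a0 k x\<bar> \<le> k\<^sup>2 / (k\<^sup>2 + a0 * b) * \<bar>x\<bar>"
    using A unfolding assumption_A_def by blast
  have FP: "mono (\<phi> \<alpha> k) \<and> (\<forall>x y. \<bar>\<phi> \<alpha> k x - \<phi> \<alpha> k y\<bar> \<le> \<bar>x - y\<bar>) \<and> \<phi> \<alpha> k 0 = 0"
    if "\<alpha> > 0" "k > 0" for \<alpha> k
    using filt that unfolding nonlinear_reg_filter_def by blast
  define s where "s i = sf (\<phi> a0 (\<kappa> i)) a0" for i
  have gm: "mono (\<phi> a0 (\<kappa> i))" for i using FP[OF a0 kpos[rule_format, of i]] by blast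
  have gl: "\<forall>x y. \<bar>\<phi> a0 (\<kappa> i) x - \<phi> a0 (\<kappa> i) y\<bar> \<le> \<bar>x - y\<bar>" for i
    using FP[OF a0 kpos[rule_format, of i]] by blast
  have g0: "\<phi> a0 (\<kappa> i) 0 = 0" for i using FP[OF a0 kpos[rule_format, of i]] by blast
  have s0: "\<forall>i. s i 0 = 0" unfolding s_def using sf_zero[OF gm gl a0 g0] by blast
  have LB: "\<forall>i t. ennreal (b / 4 * min (t\<^sup>2) (2 * c * \<bar>t\<bar>)) \<le> s i (\<kappa> i * t)"
  proof (intro allI)
    fix i t
    have "\<forall>x. (\<forall>w. \<phi> a0 (\<kappa> i) w = c * \<kappa> i \<longrightarrow> \<bar>x\<bar> \<le> w) \<longrightarrow>
        \<bar>\<phi> a0 (\<kappa> i) x\<bar> \<le> (\<kappa> i)\<^sup>2 / ((\<kappa> i)\<^sup>2 + a0 * b) * \<bar>x\<bar>"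
      using A2 kpos by blast
    then show "ennreal (b / 4 * min (t\<^sup>2) (2 * c * \<bar>t\<bar>)) \<le> s i (\<kappa> i * t)"
      unfolding s_def by (intro sf_lower_bound[OF gm gl g0 kpos[rule_format] a0 b c])
  qed
  have pdata: "\<exists>S0\<ge>0. s i (\<phi> \<alpha> (\<kappa> i) x) = ennreal S0 \<and>
      (\<forall>y. ennreal (S0 + (x - \<phi> \<alpha> (\<kappa> i) x) / \<alpha> * (y - \<phi> \<alpha> (\<kappa> i) x)) \<le> s i y)"
    if al: "\<alpha> > 0" for i \<alpha> x
  proof -
    define y0 where "y0 = \<phi> \<alpha> (\<kappa> i) x"
    have "(x - y0) / \<alpha> \<in> {(w - y0) / \<alpha> | w. \<phi> \<alpha> (\<kappa> i) w = y0}" unfolding y0_def by blast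
    also have "\<dots> = {(w - y0) / a0 | w. \<phi> a0 (\<kappa> i) w = y0}"
      using A1 kpos al a0 by blast
    finally obtain w where w: "\<phi> a0 (\<kappa> i) w = y0" "(x - y0) / \<alpha> = (w - y0) / a0" by blast
    define S0 where "S0 = s0f (\<phi> a0 (\<kappa> i)) a0 w"
    have "S0 \<ge> 0" unfolding S0_def by (rule s0_nonneg[OF gm[of i] gl[of i] a0 g0[of i]])
    moreover have "s i y0 = ennreal S0"
      unfolding s_def S0_def using sf_at[OF gm[of i] gl[of i] a0, of w] w(1) by simp
    moreover have "ennreal (S0 + (x - y0) / \<alpha> * (y - y0)) \<le> s i y" for y
    proof -
      have "S0 + (x - y0) / \<alpha> * (y - y0) = afff (\<phi> a0 (\<kappa> i)) a0 w y"
        unfolding afff_def S0_def using w by simp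
      then show ?thesis unfolding s_def by (simp add: sf_lower)
    qed
    ultimately show ?thesis unfolding y0_def by blast
  qed
  have proxa: "argmin_on UNIV (\<lambda>y. ennreal ((x - y)\<^sup>2 / 2) + ennreal \<alpha> * s i y) = {\<phi> \<alpha> (\<kappa> i) x}"
    if al: "\<alpha> > 0" for i \<alpha> x
  proof -
    obtain S0 where S0: "S0 \<ge> 0" "s i (\<phi> \<alpha> (\<kappa> i) x) = ennreal S0"
      "\<And>y. ennreal (S0 + (x - \<phi> \<alpha> (\<kappa> i) x) / \<alpha> * (y - \<phi> \<alpha> (\<kappa> i) x)) \<le> s i y"
      using pdata[OF al, of i x] by blast
    show ?thesis by (rule prox_argmin[OF al S0(2) S0(1) S0(3)])
  qed
  have strict: "\<forall>i x y. y \<noteq> \<phi> \<alpha> (\<kappa> i) x \<longrightarrow> ennreal ((x - \<phi> \<alpha> (\<kappa> i) x)\<^sup>2 / 2) + ennreal \<alpha> * s i (\<phi> \<alpha> (\<kappa> i) x)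
                 < ennreal ((x - y)\<^sup>2 / 2) + ennreal \<alpha> * s i y"
    if al: "\<alpha> > 0" for \<alpha>
  proof (intro allI impI)
    fix i x y assume ne: "y \<noteq> \<phi> \<alpha> (\<kappa> i) x"
    obtain S0 where S0: "S0 \<ge> 0" "s i (\<phi> \<alpha> (\<kappa> i) x) = ennreal S0"
      "\<And>y. ennreal (S0 + (x - \<phi> \<alpha> (\<kappa> i) x) / \<alpha> * (y - \<phi> \<alpha> (\<kappa> i) x)) \<le> s i y"
      using pdata[OF al, of i x] by blast
    show "ennreal ((x - \<phi> \<alpha> (\<kappa> i) x)\<^sup>2 / 2) + ennreal \<alpha> * s i (\<phi> \<alpha> (\<kappa> i) x)
                 < ennreal ((x - y)\<^sup>2 / 2) + ennreal \<alpha> * s i y"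
      by (rule prox_strict[OF al S0(2) S0(1) S0(3) ne])
  qed
  have opt: "\<forall>i x y. ennreal ((x - \<phi> \<alpha> (\<kappa> i) x)\<^sup>2 / 2) + ennreal \<alpha> * s i (\<phi> \<alpha> (\<kappa> i) x)
                 \<le> ennreal ((x - y)\<^sup>2 / 2) + ennreal \<alpha> * s i y"
    if al: "\<alpha> > 0" for \<alpha>
  proof (intro allI)
    fix i x y
    show "ennreal ((x - \<phi> \<alpha> (\<kappa> i) x)\<^sup>2 / 2) + ennreal \<alpha> * s i (\<phi> \<alpha> (\<kappa> i) x)
                 \<le> ennreal ((x - y)\<^sup>2 / 2) + ennreal \<alpha> * s i y"
      using strict[OF al, rule_format, of y i x] by (cases "y = \<phi> \<alpha> (\<kappa> i) x") auto
  qed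
  have xs_l2: "(\<lambda>i. \<phi> \<alpha> (\<kappa> i) (z i) / \<kappa> i) \<in> l2" if al: "\<alpha> > 0" and z: "z \<in> l2" for \<alpha> z
    by (rule dom_part[OF kpos al b c s0 LB opt[OF al] z])
  have Phi_l2: "Phi \<phi> \<alpha> \<kappa> z \<in> l2" if al: "\<alpha> > 0" and z: "z \<in> l2" for \<alpha> z
  proof (rule l2_compare[OF z, of _ 1])
    fix i
    have "\<bar>\<phi> \<alpha> (\<kappa> i) (z i) - \<phi> \<alpha> (\<kappa> i) 0\<bar> \<le> \<bar>z i - 0\<bar>"
      using FP[OF al kpos[rule_format, of i]] by blast
    then have "\<bar>\<phi> \<alpha> (\<kappa> i) (z i)\<bar> \<le> \<bar>z i\<bar>" using FP[OF al kpos[rule_format, of i]] by simp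
    then have "\<bar>\<phi> \<alpha> (\<kappa> i) (z i)\<bar>\<^sup>2 \<le> \<bar>z i\<bar>\<^sup>2" by (intro power_mono) auto
    then show "(Phi \<phi> \<alpha> \<kappa> z i)\<^sup>2 \<le> 1 * (z i)\<^sup>2" by (simp add: Phi_def)
  qed
  have part1: "\<forall>\<alpha>>0. dom_Mk_pinv_Phi \<phi> \<alpha> \<kappa> = l2"
  proof (intro allI impI)
    fix \<alpha> :: real assume al: "\<alpha> > 0"
    show "dom_Mk_pinv_Phi \<phi> \<alpha> \<kappa> = l2"
      unfolding dom_Mk_pinv_Phi_def dom_Mk_pinv_def
      using Phi_l2[OF al] xs_l2[OF al] by (auto simp: Phi_def)
  qed
  define R where "R x = (\<Sum>\<^sub>\<infinity>i. s i (\<kappa> i * x i))" for x :: "'i \<Rightarrow> real"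
  have sconv: "convex_fun_on UNIV (s i)" for i
    unfolding convex_fun_on_def s_def using sf_convex by simp
  have slsc: "lsc_real (s i)" for i
    unfolding lsc_real_def s_def using sf_lsc by blast
  have sprop: "proper_fun UNIV (s i)" for i
    unfolding proper_fun_def using s0 by (intro bexI[of _ 0]) auto
  have Rprop: "proper_fun l2 R"
    unfolding proper_fun_def R_def using zero_l2 s0 by (intro bexI[of _ "\<lambda>i. 0"]) auto
  have Rconv: "convex_l2 R"
    unfolding convex_l2_def
  proof (intro ballI allI impI)
    fix x y :: "'i \<Rightarrow> real" and t :: real assume t: "0 < t \<and> t < 1"
    have "R (\<lambda>i. (1 - t) * x i + t * y i)
        \<le> (\<Sum>\<^sub>\<infinity>i. ennreal (1 - t) * s i (\<kappa> i * x i) + ennreal t * s i (\<kappa> i * y i))"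
      unfolding R_def
    proof (intro infsum_mono)
      fix i
      have "\<kappa> i * ((1 - t) * x i + t * y i) = (1 - t) * (\<kappa> i * x i) + t * (\<kappa> i * y i)"
        by (simp add: algebra_simps)
      then show "s i (\<kappa> i * ((1 - t) * x i + t * y i))
          \<le> ennreal (1 - t) * s i (\<kappa> i * x i) + ennreal t * s i (\<kappa> i * y i)"
        unfolding s_def using sf_convex t by simp
    qed (auto intro: nonneg_summable_on_complete)
    also have "\<dots> = ennreal (1 - t) * R x + ennreal t * R y"
      unfolding R_def infsum_ennreal_cmult[symmetric]
      by (rule infsum_add) (auto intro: nonneg_summable_on_complete)
    finally show "R (\<lambda>i. (1 - t) * x i + t * y i) \<le> ennreal (1 - t) * R x + ennreal t * R y" .
  qed
  have Rlsc: "lsc_l2 R"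
    unfolding lsc_l2_def
  proof (intro ballI allI impI)
    fix x :: "'i \<Rightarrow> real" and X :: "nat \<Rightarrow> 'i \<Rightarrow> real" assume x: "x \<in> l2" and X: "\<forall>n. X n \<in> l2"
      and lim: "(\<lambda>n. l2norm (\<lambda>i. X n i - x i)) \<longlonglongrightarrow> 0"
    have pw: "(\<lambda>n. X n i) \<longlonglongrightarrow> x i" for i
    proof -
      have "(\<lambda>n. X n i - x i) \<longlonglongrightarrow> 0"
      proof (rule Lim_null_comparison[OF _ lim])
        show "\<forall>\<^sub>F n in sequentially. norm (X n i - x i) \<le> l2norm (\<lambda>i. X n i - x i)"
          using l2_coord_le[OF l2_diff[OF X[rule_format] x]] by simp
      qed
      then show ?thesis by (rule LIM_zero_cancel)
    qed
    have "R x \<le> (\<Sum>\<^sub>\<infinity>i. liminf (\<lambda>n. s i (\<kappa> i * X n i)))"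
      unfolding R_def
    proof (intro infsum_mono)
      fix i
      show "s i (\<kappa> i * x i) \<le> liminf (\<lambda>n. s i (\<kappa> i * X n i))"
        unfolding s_def by (intro sf_lsc tendsto_intros pw)
    qed (auto intro: nonneg_summable_on_complete)
    also have "\<dots> \<le> liminf (\<lambda>n. R (X n))" unfolding R_def by (rule fatou_infsum_ennreal)
    finally show "R x \<le> liminf (\<lambda>n. R (X n))" .
  qed
  have Rcoer: "norm_coercive_l2 R"
    unfolding norm_coercive_l2_def
  proof (intro allI impI)
    fix X :: "nat \<Rightarrow> 'i \<Rightarrow> real"
    assume X: "\<forall>n. X n \<in> l2 \<and> R (X n) \<noteq> \<infinity>" and lim: "filterlim (\<lambda>n. l2norm (X n)) at_top sequentially"
    have C: "2 * c > 0" using c by simp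
    have B: "b / 4 > 0" using b by simp
    have low: "ennreal (b / 4 * psi (2 * c) ((l2norm (X n))\<^sup>2 / 2)) \<le> R (X n)" for n
    proof -
      have "ennreal (b / 4 * psi (2 * c) ((l2norm (X n))\<^sup>2 / 2))
          \<le> (\<Sum>\<^sub>\<infinity>i. ennreal (b / 4 * psi (2 * c) ((X n i)\<^sup>2)))"
        using X B C by (intro psi_lower_l2) auto
      also have "\<dots> \<le> R (X n)"
        unfolding R_def
      proof (intro infsum_mono)
        fix i
        show "ennreal (b / 4 * psi (2 * c) ((X n i)\<^sup>2)) \<le> s i (\<kappa> i * X n i)"
          using LB c by (simp add: psi_sq)
      qed (auto intro: nonneg_summable_on_complete)
      finally show ?thesis .
    qed
    have "((\<lambda>n. ennreal (b / 4 * psi (2 * c) ((l2norm (X n))\<^sup>2 / 2))) \<longlonglongrightarrow> top)"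
      by (rule psi_at_top[OF C B lim])
    then have "\<forall>l\<ge>0. eventually (\<lambda>n. ennreal l < ennreal (b / 4 * psi (2 * c) ((l2norm (X n))\<^sup>2 / 2))) sequentially"
      by (simp add: tendsto_top_iff_ennreal)
    then have "\<forall>l\<ge>0. eventually (\<lambda>n. ennreal l < R (X n)) sequentially"
    proof (intro allI impI)
      fix l :: real assume l: "l \<ge> 0"
      with \<open>\<forall>l\<ge>0. _\<close> have "eventually (\<lambda>n. ennreal l < ennreal (b / 4 * psi (2 * c) ((l2norm (X n))\<^sup>2 / 2))) sequentially"
        by blast
      then show "eventually (\<lambda>n. ennreal l < R (X n)) sequentially"
        by (rule eventually_mono) (rule less_le_trans[OF _ low])
    qed
    then show "(\<lambda>n. R (X n)) \<longlonglongrightarrow> \<infinity>"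
      unfolding infinity_ennreal_def by (simp add: tendsto_top_iff_ennreal)
  qed
  have Rargmin: "\<forall>\<alpha>>0. \<forall>z\<in>l2.
      argmin_on l2 (\<lambda>x. ennreal ((l2norm (\<lambda>i. Mk \<kappa> x i - z i))\<^sup>2 / 2) + ennreal \<alpha> * R x)
        = {Mk_pinv \<kappa> (Phi \<phi> \<alpha> \<kappa> z)}"
  proof (intro allI impI ballI)
    fix \<alpha> :: real and z :: "'i \<Rightarrow> real" assume al: "\<alpha> > 0" and z: "z \<in> l2"
    have "Mk_pinv \<kappa> (Phi \<phi> \<alpha> \<kappa> z) = (\<lambda>i. \<phi> \<alpha> (\<kappa> i) (z i) / \<kappa> i)"
      by (simp add: Mk_pinv_def Phi_def)
    then show "argmin_on l2 (\<lambda>x. ennreal ((l2norm (\<lambda>i. Mk \<kappa> x i - z i))\<^sup>2 / 2) + ennreal \<alpha> * R x)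
        = {Mk_pinv \<kappa> (Phi \<phi> \<alpha> \<kappa> z)}"
      unfolding R_def using argmin_part[OF kpos K al strict[OF al] s0 z xs_l2[OF al z]] by simp
  qed
  show ?thesis
    unfolding Let_def
  proof (intro conjI exI[of _ s])
    show "\<forall>\<alpha>>0. dom_Mk_pinv_Phi \<phi> \<alpha> \<kappa> = l2" by (rule part1)
    show "\<forall>i. proper_fun UNIV (s i) \<and> convex_fun_on UNIV (s i) \<and> lsc_real (s i) \<and> s i 0 = 0 \<and>
            (\<forall>\<alpha>>0. \<forall>x. argmin_on UNIV (\<lambda>y. ennreal ((x - y)\<^sup>2 / 2) + ennreal \<alpha> * s i y)
                         = {\<phi> \<alpha> (\<kappa> i) x})"
      using sprop sconv slsc s0 proxa by blast
    show "proper_fun l2 (\<lambda>x. \<Sum>\<^sub>\<infinity>i. s i (\<kappa> i * x i))" using Rprop unfolding R_def .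
    show "convex_l2 (\<lambda>x. \<Sum>\<^sub>\<infinity>i. s i (\<kappa> i * x i))" using Rconv unfolding R_def .
    show "lsc_l2 (\<lambda>x. \<Sum>\<^sub>\<infinity>i. s i (\<kappa> i * x i))" using Rlsc unfolding R_def .
    show "norm_coercive_l2 (\<lambda>x. \<Sum>\<^sub>\<infinity>i. s i (\<kappa> i * x i))" using Rcoer unfolding R_def .
    show "\<forall>\<alpha>>0. \<forall>z\<in>l2.
      argmin_on l2 (\<lambda>x. ennreal ((l2norm (\<lambda>i. Mk \<kappa> x i - z i))\<^sup>2 / 2) + ennreal \<alpha> * (\<Sum>\<^sub>\<infinity>i. s i (\<kappa> i * x i)))
        = {Mk_pinv \<kappa> (Phi \<phi> \<alpha> \<kappa> z)}" using Rargmin unfolding R_def .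
  qed
qed


end
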